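(* Let $0\le\mu\le\nu$ and let $f_1,\dots,f_\nu:\mathbb{R}^m\times\mathbb{R}^m\to\mathcal{G}^{p,q}$ satisfy $f_l(\vec x,\vec u)=s_l(\vec x,\vec u)\,i_l(\vec u)$ with $s_l$ real-valued and linear in $\vec x$ and $i_l:\mathbb{R}^m\to\mathscr I^{p,q}$, such that for every $\vec u$ the elements $i_1(\vec u),\dots,i_\nu(\vec u)$ are mutually coorthogonal blades, the elements $i_1(\vec u),\dots,i_\mu(\vec u)$ mutually commute, and the elements $i_{\mu+1}(\vec u),\dots,i_\nu(\vec u)$ mutually commute. Let $\vec B,\vec C:\mathbb{R}^m\to\mathcal{G}^{p,q}$ and $\vec A(\vec x)=\int_{\mathbb{R}^m}\vec C(\vec y)\vec B(\vec x-\vec y)\,\mathrm d^m\vec y$. For signs $\vec\sigma\in\{0,1\}^\mu$, $\vec\tau\in\{0,1\}^{\nu-\mu}$ and $\vec D:\mathbb{R}^m\to\mathcal{G}^{p,q}$ write $\mathscr F^{\vec\sigma,\vec\tau}(\vec D)(\vec u)=\int_{\mathbb{R}^m}\prod_{l=1}^{\mu}e^{-(-1)^{\sigma_l}f_l(\vec x,\vec u)}\vec D(\vec x)\prod_{l=\mu+1}^{\nu}e^{-(-1)^{\tau_{l-\mu}}f_l(\vec x,\vec u)}\,\mathrm d^m\vec x$ (products ordered with $l$ increasing), and $\mathscr F=\mathscr F^{0,0}$. Then for every $\vec u$, writing $I_1=(i_1(\vec u),\dots,i_\mu(\vec u))$ and $I_2=(i_{\mu+1}(\vec u),\dots,i_\nu(\vec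 u))$, $$\mathscr F(\vec A)(\vec u)=\sum_{\vec j'\in\{0,1\}^\mu,\ \vec k'\in\{0,1\}^{\nu-\mu}}\big(\mathscr F^{0,\vec k'}(\vec C)(\vec u)\big)_{\vec c^{\vec j'}(I_1)}\ \mathscr F^{\vec j',0}\big(\vec B_{\vec c^{\vec k'}(I_2)}\big)(\vec u)$$ and $$\mathscr F(\vec A)(\vec u)=\sum_{\vec j'\in\{0,1\}^\mu,\ \vec k'\in\{0,1\}^{\nu-\mu}}\mathscr F^{0,\vec k'}\big(\vec C_{\vec c^{\vec j'}(I_1)}\big)(\vec u)\ \big(\mathscr F^{\vec j',0}(\vec B)(\vec u)\big)_{\vec c^{\vec k'}(I_2)},$$ where $\vec B_{\vec c^{\vec k'}(I_2)}$ and $\vec C_{\vec c^{\vec j'}(I_1)}$ denote pointwise decompositions. If moreover all values $f_l(\vec x,\vec u)$ lie in the center of $\mathcal{G}^{p,q}$, then $\mathscr F(\vec A)(\vec u)=\mathscr F(\vec C)(\vec u)\,\mathscr F(\vec B)(\vec u)$.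
   Context: $\mathcal{G}^{p,q}$ is the real geometric algebra of $\mathbb{R}^{p,q}$; $\mathscr I^{p,q}=\{i\in\mathcal{G}^{p,q}: i^2\in\mathbb{R},\ i^2<0\}$ (its elements are invertible); $e^X=\sum_r X^r/r!$. Blades are coorthogonal if $\vec A\vec B=\pm\vec B\vec A$. For invertible $b$ and $X\in\mathcal{G}^{p,q}$: $X_{\vec c^0(b)}=\frac12(X+b^{-1}Xb)$, $X_{\vec c^1(b)}=\frac12(X-b^{-1}Xb)$; for invertible $b_1,\dots,b_d$ and $\vec t\in\{0,1\}^d$: $X_{\vec c^{\vec t}(b_1,\dots,b_d)}=((X_{\vec c^{t_1}(b_1)})_{\vec c^{t_2}(b_2)}\cdots)_{\vec c^{t_d}(b_d)}$. Decomposition with respect to a function value $f_k(\vec x,\vec u)=s_k i_k(\vec u)$, $s_k\neq 0$, coincides with decomposition with respect to $i_k(\vec u)$. All integrals are assumed to exist. *)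

theory Defs
  imports "HOL-Analysis.Analysis"
begin

text \<open>
The generators e_i are indexed by a finite,
linearly ordered type 'n (so p + q = CARD('n)); the set Pos of generators
squares to +1, the remaining ones square to -1 (p = card Pos, q = card (-Pos)).
A multivector is its coefficient vector with respect to the basis blades e_A,
A a set of generators, i.e. an element of the euclidean space real^('n set).
\<close>

type_synonym 'n mv = "real ^ ('n set)"

text \<open>Sign of the product of basis blades: e_A e_B = blade_sign Pos A B e_(A sym-diff B).\<close>
definition blade_sign :: "('n::{finite,linorder}) set \<Rightarrow> 'n set \<Rightarrow> 'n set \<Rightarrow> real" where
  "blade_sign Pos A B =
     (-1) ^ card {(a, b). a \<in> A \<and> b \<in> B \<and> b < a} *
     (\<Prod>i\<in>A \<inter> B. if i \<in> Pos then 1 else -1)"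

definition gprod :: "('n::{finite,linorder}) set \<Rightarrow> 'n mv \<Rightarrow> 'n mv \<Rightarrow> 'n mv" where
  "gprod Pos x y = (\<chi> C. \<Sum>A\<in>UNIV. blade_sign Pos A ((A - C) \<union> (C - A)) * x $ A * y $ ((A - C) \<union> (C - A)))"

definition wedge :: "('n::{finite,linorder}) set \<Rightarrow> 'n mv \<Rightarrow> 'n mv \<Rightarrow> 'n mv" where
  "wedge Pos x y = (\<chi> C. \<Sum>A\<in>UNIV. \<Sum>B\<in>UNIV.
      if A \<inter> B = {} \<and> A \<union> B = C then blade_sign Pos A B * x $ A * y $ B else 0)"

definition scal :: "real \<Rightarrow> ('n::finite) mv" where
  "scal r = (\<chi> A. if A = {} then r else 0)"

definition is_vector :: "('n::finite) mv \<Rightarrow> bool" where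
  "is_vector x \<longleftrightarrow> (\<forall>A. card A \<noteq> 1 \<longrightarrow> x $ A = 0)"

definition is_blade :: "('n::{finite,linorder}) set \<Rightarrow> 'n mv \<Rightarrow> bool" where
  "is_blade Pos x \<longleftrightarrow> (\<exists>r vs. (\<forall>v\<in>set vs. is_vector v) \<and> x = r *\<^sub>R foldr (wedge Pos) vs (scal 1))"

definition coorthogonal :: "('n::{finite,linorder}) set \<Rightarrow> 'n mv \<Rightarrow> 'n mv \<Rightarrow> bool" where
  "coorthogonal Pos a b \<longleftrightarrow> gprod Pos a b = gprod Pos b a \<or> gprod Pos a b = - gprod Pos b a"

text \<open>The set I^{p,q} of elements squaring to a negative real.\<close>
definition sqneg :: "('n::{finite,linorder}) set \<Rightarrow> 'n mv set" where
  "sqneg Pos = {i. \<exists>r::real. gprod Pos i i = scal r \<and> r < 0}"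

definition gcenter :: "('n::{finite,linorder}) set \<Rightarrow> 'n mv set" where
  "gcenter Pos = {z. \<forall>y. gprod Pos z y = gprod Pos y z}"

definition ginv :: "('n::{finite,linorder}) set \<Rightarrow> 'n mv \<Rightarrow> 'n mv" where
  "ginv Pos x = (SOME y. gprod Pos x y = scal 1 \<and> gprod Pos y x = scal 1)"

fun gpow :: "('n::{finite,linorder}) set \<Rightarrow> 'n mv \<Rightarrow> nat \<Rightarrow> 'n mv" where
  "gpow Pos x 0 = scal 1"
| "gpow Pos x (Suc n) = gprod Pos x (gpow Pos x n)"

definition gexp :: "('n::{finite,linorder}) set \<Rightarrow> 'n mv \<Rightarrow> 'n mv" where
  "gexp Pos x = (\<Sum>r. (1 / fact r) *\<^sub>R gpow Pos x r)"

definition gprod_list :: "('n::{finite,linorder}) set \<Rightarrow> 'n mv list \<Rightarrow> 'n mv" where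
  "gprod_list Pos xs = foldr (gprod Pos) xs (scal 1)"

text \<open>Decomposition X_{c^t(b)}; t = False means t = 0, t = True means t = 1.\<close>
definition cdec :: "('n::{finite,linorder}) set \<Rightarrow> 'n mv \<Rightarrow> bool \<Rightarrow> 'n mv \<Rightarrow> 'n mv" where
  "cdec Pos b t X = (1/2) *\<^sub>R (X + (if t then -1 else 1) *\<^sub>R gprod Pos (ginv Pos b) (gprod Pos X b))"

text \<open>Iterated decomposition X_{c^{t}(b_1,...,b_d)}, applying b_1 first.\<close>
definition cdecs :: "('n::{finite,linorder}) set \<Rightarrow> 'n mv list \<Rightarrow> bool list \<Rightarrow> 'n mv \<Rightarrow> 'n mv" where
  "cdecs Pos bs ts X = fold (\<lambda>(b, t) Y. cdec Pos b t Y) (zip bs ts) X"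

definition sgnb :: "bool \<Rightarrow> real" where
  "sgnb t = (if t then -1 else 1)"

text \<open>The transform F^{sigma,tau}(D)(u); indices l = 1..nu, sigma and tau are
  bit lists (True = 1) of lengths mu and nu - mu.\<close>
definition FT :: "('n::{finite,linorder}) set \<Rightarrow> (nat \<Rightarrow> real^'m \<Rightarrow> real^'m \<Rightarrow> 'n mv)
    \<Rightarrow> nat \<Rightarrow> nat \<Rightarrow> bool list \<Rightarrow> bool list \<Rightarrow> (real^'m \<Rightarrow> 'n mv) \<Rightarrow> real^'m \<Rightarrow> 'n mv" where
  "FT Pos f mu nu sig tau D u =
     (LINT x|lborel.
        gprod Pos
          (gprod Pos
             (gprod_list Pos (map (\<lambda>l. gexp Pos (- (sgnb (sig ! (l - 1))) *\<^sub>R f l x u)) [1..<mu+1]))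
             (D x))
          (gprod_list Pos (map (\<lambda>l. gexp Pos (- (sgnb (tau ! (l - mu - 1))) *\<^sub>R f l x u)) [mu+1..<nu+1])))"

definition gconv :: "('n::{finite,linorder}) set \<Rightarrow> (real^'m \<Rightarrow> 'n mv) \<Rightarrow> (real^'m \<Rightarrow> 'n mv) \<Rightarrow> real^'m \<Rightarrow> 'n mv" where
  "gconv Pos C B x = (LINT y|lborel. gprod Pos (C y) (B (x - y)))"

end

theory Submission
  imports Defs
begin


definition sd :: "'a set \<Rightarrow> 'a set \<Rightarrow> 'a set" where "sd A B = (A - B) \<union> (B - A)"

lemma gprod_nth: "gprod Pos x y $ C = (\<Sum>A\<in>UNIV. blade_sign Pos A (sd A C) * x $ A * y $ (sd A C))"
  by (simp add: gprod_def sd_def)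

definition ofac :: "'n::{finite,linorder} set \<Rightarrow> 'n set \<Rightarrow> 'n \<Rightarrow> 'n \<Rightarrow> real" where
  "ofac A B a b = (if a \<in> A \<and> b \<in> B \<and> b < a then -1 else 1)"
definition dfac :: "'n::{finite,linorder} set \<Rightarrow> 'n set \<Rightarrow> 'n set \<Rightarrow> 'n \<Rightarrow> real" where
  "dfac Pos A B a = (if a \<in> A \<and> a \<in> B \<and> a \<notin> Pos then -1 else 1)"

lemma bs_alt: "blade_sign Pos A B = (\<Prod>a\<in>UNIV. \<Prod>b\<in>UNIV. ofac A B a b) * (\<Prod>a\<in>UNIV. dfac Pos A B a)"
proof -
  let ?S = "{(a, b). a \<in> A \<and> b \<in> B \<and> b < a}"
  have "(-1::real) ^ card ?S = (\<Prod>p\<in>?S. -1)" by simp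
  also have "\<dots> = (\<Prod>p\<in>UNIV. if p \<in> ?S then -1 else 1)"
    by (simp add: prod.If_cases)
  also have "\<dots> = (\<Prod>(a,b)\<in>UNIV. ofac A B a b)"
    by (rule prod.cong[OF refl]) (clarsimp simp: ofac_def)
  also have "\<dots> = (\<Prod>a\<in>UNIV. \<Prod>b\<in>UNIV. ofac A B a b)"
    by (simp only: prod.cartesian_product UNIV_Times_UNIV)
  finally have 1: "(-1::real) ^ card ?S = (\<Prod>a\<in>UNIV. \<Prod>b\<in>UNIV. ofac A B a b)" .
  have 2: "(\<Prod>i\<in>A \<inter> B. if i \<in> Pos then 1 else -1::real) = (\<Prod>a\<in>UNIV. dfac Pos A B a)"
    by (simp add: prod.If_cases dfac_def) (rule arg_cong[where f="\<lambda>S. (-1::real)^card S"], auto)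
  show ?thesis unfolding blade_sign_def 1 2 ..
qed

lemma bs_assoc:
  "blade_sign Pos X Y * blade_sign Pos (sd X Y) Z = blade_sign Pos X (sd Y Z) * blade_sign Pos Y Z"
proof -
  have o: "ofac X Y a b * ofac (sd X Y) Z a b = ofac X (sd Y Z) a b * ofac Y Z a b" for a b
    unfolding ofac_def sd_def
    by (cases "a \<in> X"; cases "a \<in> Y"; cases "b \<in> Y"; cases "b \<in> Z"; cases "b < a"; simp)
  have d: "dfac Pos X Y a * dfac Pos (sd X Y) Z a = dfac Pos X (sd Y Z) a * dfac Pos Y Z a" for a
    unfolding dfac_def sd_def
    by (cases "a \<in> X"; cases "a \<in> Y"; cases "a \<in> Z"; cases "a \<in> Pos"; simp)
  have O: "(\<Prod>a\<in>UNIV. \<Prod>b\<in>UNIV. ofac X Y a b) * (\<Prod>a\<in>UNIV. \<Prod>b\<in>UNIV. ofac (sd X Y) Z a b)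
      = (\<Prod>a\<in>UNIV. \<Prod>b\<in>UNIV. ofac X (sd Y Z) a b) * (\<Prod>a\<in>UNIV. \<Prod>b\<in>UNIV. ofac Y Z a b)"
  proof -
    have "(\<Prod>a\<in>UNIV. \<Prod>b\<in>UNIV. ofac X Y a b * ofac (sd X Y) Z a b) = (\<Prod>a\<in>UNIV. \<Prod>b\<in>UNIV. ofac X (sd Y Z) a b * ofac Y Z a b)"
      by (simp only: o)
    then show ?thesis by (simp only: prod.distrib)
  qed
  have D: "(\<Prod>a\<in>UNIV. dfac Pos X Y a) * (\<Prod>a\<in>UNIV. dfac Pos (sd X Y) Z a)
      = (\<Prod>a\<in>UNIV. dfac Pos X (sd Y Z) a) * (\<Prod>a\<in>UNIV. dfac Pos Y Z a)"
  proof -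
    have "(\<Prod>a\<in>UNIV. dfac Pos X Y a * dfac Pos (sd X Y) Z a) = (\<Prod>a\<in>UNIV. dfac Pos X (sd Y Z) a * dfac Pos Y Z a)"
      by (simp only: d)
    then show ?thesis by (simp only: prod.distrib)
  qed
  have ac: "(p1 * q1) * (p2 * q2) = (p1 * p2) * (q1 * (q2::real))" for p1 q1 p2 q2
    by (simp add: ac_simps)
  show ?thesis unfolding bs_alt by (subst (1 2) ac) (simp only: O D)
qed

lemma sd_sd[simp]: "sd A (sd A B) = B" by (auto simp: sd_def)
lemma sd_assoc: "sd (sd A B) C = sd A (sd B C)" by (auto simp: sd_def)
lemma sd_comm: "sd A B = sd B A" by (auto simp: sd_def)
lemma sd_self[simp]: "sd A A = {}" "sd {} A = A" "sd A {} = A" by (auto simp: sd_def)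
lemma sd_empty_iff: "sd A B = {} \<longleftrightarrow> A = B" by (auto simp: sd_def)

lemma inj_sd: "inj (sd E)" by (metis injI sd_sd)
lemma surj_sd: "range (sd E) = UNIV" by (metis UNIV_eq_I rangeI sd_sd)

lemma gprod_assoc: "gprod Pos (gprod Pos x y) z = gprod Pos x (gprod Pos y z)"
proof (rule vec_eq_iff[THEN iffD2], rule allI)
  fix D
  have "gprod Pos (gprod Pos x y) z $ D =
     (\<Sum>A\<in>UNIV. \<Sum>E\<in>UNIV. blade_sign Pos A (sd A D) * blade_sign Pos E (sd E A) * x $ E * y $ sd E A * z $ sd A D)"
    by (simp add: gprod_nth sum_distrib_left sum_distrib_right mult.assoc mult.left_commute)
  also have "\<dots> = (\<Sum>E\<in>UNIV. \<Sum>A\<in>UNIV. blade_sign Pos A (sd A D) * blade_sign Pos E (sd E A) * x $ E * y $ sd E A * z $ sd A D)"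
    by (rule sum.swap)
  also have "\<dots> = (\<Sum>E\<in>UNIV. \<Sum>F\<in>UNIV. blade_sign Pos (sd E F) (sd (sd E F) D) * blade_sign Pos E F * x $ E * y $ F * z $ sd (sd E F) D)"
  proof (rule sum.cong[OF refl])
    fix E
    show "(\<Sum>A\<in>UNIV. blade_sign Pos A (sd A D) * blade_sign Pos E (sd E A) * x $ E * y $ sd E A * z $ sd A D) =
        (\<Sum>F\<in>UNIV. blade_sign Pos (sd E F) (sd (sd E F) D) * blade_sign Pos E F * x $ E * y $ F * z $ sd (sd E F) D)"
      by (rule sum.reindex_bij_witness[of _ "sd E" "sd E"]) auto
  qed
  also have "\<dots> = (\<Sum>E\<in>UNIV. \<Sum>F\<in>UNIV. blade_sign Pos E (sd E D) * blade_sign Pos F (sd F (sd E D)) * x $ E * y $ F * z $ sd F (sd E D))"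
  proof (intro sum.cong refl)
    fix E F
    have e1: "sd (sd E F) D = sd F (sd E D)" by (auto simp: sd_def)
    have e2: "sd F (sd F (sd E D)) = sd E D" by simp
    have "blade_sign Pos E F * blade_sign Pos (sd E F) (sd F (sd E D)) = blade_sign Pos E (sd E D) * blade_sign Pos F (sd F (sd E D))"
      using bs_assoc[of Pos E F "sd F (sd E D)"] by (simp only: e2)
    then show "blade_sign Pos (sd E F) (sd (sd E F) D) * blade_sign Pos E F * x $ E * y $ F * z $ sd (sd E F) D =
        blade_sign Pos E (sd E D) * blade_sign Pos F (sd F (sd E D)) * x $ E * y $ F * z $ sd F (sd E D)"
      unfolding e1 by (simp add: mult.commute mult.left_commute)
  qed
  also have "\<dots> = gprod Pos x (gprod Pos y z) $ D"
    by (simp add: gprod_nth sum_distrib_left sum_distrib_right mult.assoc mult.left_commute)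
  finally show "gprod Pos (gprod Pos x y) z $ D = gprod Pos x (gprod Pos y z) $ D" .
qed

lemma bs_empty[simp]: "blade_sign Pos {} B = 1" "blade_sign Pos A {} = 1"
  by (simp_all add: blade_sign_def)

lemma scal_nth: "scal r $ A = (if A = {} then r else 0)" by (simp add: scal_def)

lemma gprod_scal_left[simp]: "gprod Pos (scal r) x = r *\<^sub>R x"
proof -
  have "gprod Pos (scal r) x $ D = r * x $ D" for D
  proof -
    have "gprod Pos (scal r) x $ D = (\<Sum>A\<in>UNIV. if A = {} then blade_sign Pos A (sd A D) * r * x $ (sd A D) else 0)"
      by (rule trans[OF gprod_nth]) (rule sum.cong, auto simp: scal_nth)
    then show ?thesis by simp
  qed
  then show ?thesis by (simp add: vec_eq_iff)
qed

lemma gprod_scal_right[simp]: "gprod Pos x (scal r) = r *\<^sub>R x"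
proof -
  have "gprod Pos x (scal r) $ D = r * x $ D" for D
  proof -
    have "gprod Pos x (scal r) $ D = (\<Sum>A\<in>UNIV. if A = D then blade_sign Pos A (sd A D) * x $ A * r else 0)"
      by (rule trans[OF gprod_nth]) (rule sum.cong, auto simp: scal_nth sd_empty_iff)
    then show ?thesis by simp
  qed
  then show ?thesis by (simp add: vec_eq_iff)
qed

lemma bilinear_gprod: "bilinear (gprod Pos)"
  unfolding bilinear_def
  by (auto intro!: linearI simp: vec_eq_iff gprod_nth algebra_simps sum.distrib sum_distrib_left)

lemma bb_gprod: "bounded_bilinear (gprod Pos)"
  using bilinear_gprod bilinear_conv_bounded_bilinear by blast


lemmas gp_add_left = bounded_bilinear.add_left[OF bb_gprod]
lemmas gp_add_right = bounded_bilinear.add_right[OF bb_gprod]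
lemmas gp_scaleR_left = bounded_bilinear.scaleR_left[OF bb_gprod]
lemmas gp_scaleR_right = bounded_bilinear.scaleR_right[OF bb_gprod]
lemmas gp_diff_left = bounded_bilinear.diff_left[OF bb_gprod]
lemmas gp_diff_right = bounded_bilinear.diff_right[OF bb_gprod]
lemmas gp_minus_left = bounded_bilinear.minus_left[OF bb_gprod]
lemmas gp_minus_right = bounded_bilinear.minus_right[OF bb_gprod]
lemmas gp_zero_left = bounded_bilinear.zero_left[OF bb_gprod]
lemmas gp_zero_right = bounded_bilinear.zero_right[OF bb_gprod]
lemmas gp_sum_left = bounded_bilinear.sum_left[OF bb_gprod]
lemmas gp_sum_right = bounded_bilinear.sum_right[OF bb_gprod]
lemmas gp_lin = gp_add_left gp_add_right gp_scaleR_left gp_scaleR_right gp_diff_left gp_diff_right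
  gp_minus_left gp_minus_right gp_zero_left gp_zero_right

lemma scal_eq: "scal r = r *\<^sub>R (scal 1 :: ('n::finite) mv)"
  by (simp add: vec_eq_iff scal_nth)

definition ww :: "('n::{finite,linorder}) set \<Rightarrow> 'n mv \<Rightarrow> real" where
  "ww Pos i = sqrt (- (gprod Pos i i $ {}))"

definition EE :: "('n::{finite,linorder}) set \<Rightarrow> 'n mv \<Rightarrow> real \<Rightarrow> 'n mv" where
  "EE Pos i t = cos (t * ww Pos i) *\<^sub>R scal 1 + (sin (t * ww Pos i) / ww Pos i) *\<^sub>R i"

lemma sqnegD:
  assumes "i \<in> sqneg Pos"
  shows "gprod Pos i i = (- (ww Pos i * ww Pos i)) *\<^sub>R scal 1" "ww Pos i > 0"
proof -
  obtain r where r: "gprod Pos i i = scal r" "r < 0" using assms by (auto simp: sqneg_def)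
  have w: "ww Pos i = sqrt (-r)" using r by (simp add: ww_def scal_nth)
  show "gprod Pos i i = (- (ww Pos i * ww Pos i)) *\<^sub>R scal 1" using r w by (simp add: scal_eq[of r])
  show "ww Pos i > 0" using r w by simp
qed

definition phi :: "('n::{finite,linorder}) mv \<Rightarrow> complex \<Rightarrow> 'n mv" where
  "phi j z = Re z *\<^sub>R scal 1 + Im z *\<^sub>R j"

lemma phi_bl: "bounded_linear (phi j)"
  unfolding phi_def
  by (intro bounded_linear_add bounded_linear_scaleR_const bounded_linear_Re bounded_linear_Im)

lemma phi_mult:
  assumes "gprod Pos j j = - scal 1"
  shows "phi j (z * w) = gprod Pos (phi j z) (phi j w)"
  using assms by (simp add: phi_def gp_lin algebra_simps)

lemma phi_pow:
  assumes "gprod Pos j j = - scal 1"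
  shows "gpow Pos (phi j z) n = phi j (z ^ n)"
  by (induction n) (auto simp: phi_def[of j 1] phi_mult[OF assms, symmetric])

lemma phi_exp:
  assumes "gprod Pos j j = - scal 1"
  shows "gexp Pos (phi j z) = phi j (exp z)"
proof -
  have "gexp Pos (phi j z) = (\<Sum>n. phi j (z ^ n /\<^sub>R fact n))"
    unfolding gexp_def phi_pow[OF assms]
    by (simp add: linear_scale[OF bounded_linear.linear[OF phi_bl]] divide_inverse_commute)
  also have "\<dots> = phi j (\<Sum>n. z ^ n /\<^sub>R fact n)"
    by (rule bounded_linear.suminf[OF phi_bl, symmetric]) (rule summable_exp_generic)
  finally show ?thesis by (simp add: exp_def)
qed

lemma gexp_closed:
  assumes "i \<in> sqneg Pos"
  shows "gexp Pos (t *\<^sub>R i) = EE Pos i t"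
proof -
  let ?w = "ww Pos i"
  note sq = sqnegD[OF assms]
  define j where "j = (1 / ?w) *\<^sub>R i"
  have jj: "gprod Pos j j = - scal 1"
    using sq by (simp add: j_def gp_lin power2_eq_square)
  have "t *\<^sub>R i = phi j (\<i> * of_real (t * ?w))"
    using sq by (simp add: phi_def j_def)
  then have "gexp Pos (t *\<^sub>R i) = phi j (exp (\<i> * of_real (t * ?w)))"
    by (simp add: phi_exp[OF jj])
  also have "\<dots> = EE Pos i t"
    by (simp add: phi_def EE_def j_def Re_exp Im_exp)
  finally show ?thesis .
qed


context fixes Pos :: "('n::{finite,linorder}) set" begin

abbreviation gp (infixl "\<odot>" 70) where "x \<odot> y \<equiv> gprod Pos x y"

lemma two_form_mult:
  assumes "i \<in> sqneg Pos"
  shows "(p *\<^sub>R scal 1 + q *\<^sub>R i) \<odot> (p' *\<^sub>R scal 1 + q' *\<^sub>R i) =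
     (p * p' - q * q' * (ww Pos i * ww Pos i)) *\<^sub>R scal 1 + (p * q' + q * p') *\<^sub>R i"
proof -
  have "(p *\<^sub>R scal 1 + q *\<^sub>R i) \<odot> (p' *\<^sub>R scal 1 + q' *\<^sub>R i) =
     (p * p') *\<^sub>R scal 1 + (p * q') *\<^sub>R i + (q * p') *\<^sub>R i + (q * q' * - (ww Pos i * ww Pos i)) *\<^sub>R scal 1"
    by (simp add: gp_add_left gp_add_right gp_scaleR_left gp_scaleR_right sqnegD(1)[OF assms])
      (simp add: scaleR_add_right scaleR_diff_right ac_simps)
  also have "\<dots> = (p * p' - q * q' * (ww Pos i * ww Pos i)) *\<^sub>R scal 1 + (p * q' + q * p') *\<^sub>R i"
    by (simp add: scaleR_diff_left scaleR_add_left)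
  finally show ?thesis .
qed

lemma EE_add:
  assumes "i \<in> sqneg Pos"
  shows "EE Pos i a \<odot> EE Pos i b = EE Pos i (a + b)"
proof -
  have w: "ww Pos i > 0" using sqnegD(2)[OF assms] .
  show ?thesis
    unfolding EE_def two_form_mult[OF assms]
    using w by (simp add: distrib_right cos_add sin_add field_simps)
qed

lemma EE_zero[simp]: "EE Pos i 0 = scal 1" by (simp add: EE_def)

lemma sign_cases: "(\<sigma>::real) * \<sigma> = 1 \<Longrightarrow> \<sigma> = 1 \<or> \<sigma> = -1"
  by (simp add: square_eq_1_iff)


lemma EE_pass:
  assumes "i \<odot> Y = \<sigma> *\<^sub>R (Y \<odot> i)" "\<sigma> * \<sigma> = 1"
  shows "EE Pos i a \<odot> Y = Y \<odot> EE Pos i (\<sigma> * a)"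
  using sign_cases[OF assms(2)] assms(1)
  by (auto simp: EE_def gp_add_left gp_add_right gp_scaleR_left gp_scaleR_right)

lemma EE_comm:
  assumes "i \<odot> i' = i' \<odot> i"
  shows "EE Pos i a \<odot> EE Pos i' b = EE Pos i' b \<odot> EE Pos i a"
  using assms by (simp add: EE_def gp_add_left gp_add_right gp_scaleR_left gp_scaleR_right) (simp add: scaleR_add_right ac_simps)

lemma EE_central:
  assumes "i \<in> gcenter Pos"
  shows "EE Pos i a \<in> gcenter Pos"
  using assms by (simp add: gcenter_def EE_def gp_add_left gp_add_right gp_scaleR_left gp_scaleR_right)

lemma gexp_scaled:
  assumes "i \<in> sqneg Pos"
  shows "gexp Pos (c *\<^sub>R (s *\<^sub>R i)) = EE Pos i (c * s)"
  using gexp_closed[OF assms] by simp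

lemma ginv_eq:
  assumes "i \<in> sqneg Pos"
  shows "ginv Pos i = (- 1 / (ww Pos i * ww Pos i)) *\<^sub>R i"
proof -
  note sq = sqnegD[OF assms]
  let ?y = "(- 1 / (ww Pos i * ww Pos i)) *\<^sub>R i"
  have y1: "i \<odot> ?y = scal 1" "?y \<odot> i = scal 1" using sq by (simp_all add: gp_lin)
  show ?thesis unfolding ginv_def
  proof (rule some_equality)
    show "i \<odot> ?y = scal 1 \<and> ?y \<odot> i = scal 1" using y1 by simp
  next
    fix y assume "i \<odot> y = scal 1 \<and> y \<odot> i = scal 1"
    then have "y = (?y \<odot> i) \<odot> y" using y1 by simp
    also have "\<dots> = ?y" using \<open>i \<odot> y = scal 1 \<and> y \<odot> i = scal 1\<close> by (simp add: gprod_assoc)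
    finally show "y = ?y" .
  qed
qed

lemma cdec_eq:
  assumes "b \<in> sqneg Pos"
  shows "cdec Pos b t X = (1/2) *\<^sub>R (X + (sgnb t * (- 1 / (ww Pos b * ww Pos b))) *\<^sub>R (b \<odot> (X \<odot> b)))"
  by (simp add: cdec_def ginv_eq[OF assms] gp_lin sgnb_def)

lemma sgnb_sq[simp]: "sgnb t * sgnb t = 1" by (simp add: sgnb_def)

lemma cdec_prop:
  assumes "b \<in> sqneg Pos"
  shows "b \<odot> cdec Pos b t X = sgnb t *\<^sub>R (cdec Pos b t X \<odot> b)"
proof -
  note sq = sqnegD[OF assms]
  have 1: "b \<odot> (b \<odot> (X \<odot> b)) = (- (ww Pos b * ww Pos b)) *\<^sub>R (X \<odot> b)"
    by (simp add: gprod_assoc[symmetric] sq gp_lin)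
  have 2: "(b \<odot> (X \<odot> b)) \<odot> b = (- (ww Pos b * ww Pos b)) *\<^sub>R (b \<odot> X)"
    by (simp add: gprod_assoc sq gp_lin)
  show ?thesis
    unfolding cdec_eq[OF assms] using sq(2)
    by (simp add: gp_lin 1 2 algebra_simps)
qed

lemma cdec_pres:
  assumes "b \<in> sqneg Pos" "b' \<odot> b = \<epsilon> *\<^sub>R (b \<odot> b')" "\<epsilon> * \<epsilon> = 1"
    and "b' \<odot> Y = \<sigma> *\<^sub>R (Y \<odot> b')"
  shows "b' \<odot> cdec Pos b t Y = \<sigma> *\<^sub>R (cdec Pos b t Y \<odot> b')"
proof -
  have "b' \<odot> (b \<odot> (Y \<odot> b)) = (b' \<odot> b) \<odot> (Y \<odot> b)" by (simp add: gprod_assoc)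
  also have "\<dots> = \<epsilon> *\<^sub>R (b \<odot> ((b' \<odot> Y) \<odot> b))" using assms(2) by (simp add: gp_lin gprod_assoc)
  also have "\<dots> = (\<epsilon> * \<sigma>) *\<^sub>R (b \<odot> (Y \<odot> (b' \<odot> b)))" using assms(4) by (simp add: gp_lin gprod_assoc)
  also have "\<dots> = (\<epsilon> * \<sigma> * \<epsilon>) *\<^sub>R (b \<odot> (Y \<odot> (b \<odot> b')))" using assms(2) by (simp add: gp_lin)
  also have "\<dots> = \<sigma> *\<^sub>R ((b \<odot> (Y \<odot> b)) \<odot> b')"
  proof -
    have "\<epsilon> * \<sigma> * \<epsilon> = \<sigma> * (\<epsilon> * \<epsilon>)" by (simp add: ac_simps)
    then have "\<epsilon> * \<sigma> * \<epsilon> = \<sigma>" using assms(3) by simp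
    then show ?thesis by (simp add: gprod_assoc)
  qed
  finally have *: "b' \<odot> (b \<odot> (Y \<odot> b)) = \<sigma> *\<^sub>R ((b \<odot> (Y \<odot> b)) \<odot> b')" .
  show ?thesis unfolding cdec_eq[OF assms(1)]
    by (simp add: gp_lin * assms(4)) (simp add: scaleR_diff_right)
qed

lemma coorth_eps:
  assumes "coorthogonal Pos a b"
  shows "\<exists>\<epsilon>. \<epsilon> * \<epsilon> = (1::real) \<and> a \<odot> b = \<epsilon> *\<^sub>R (b \<odot> a)"
proof (cases "a \<odot> b = b \<odot> a")
  case True then show ?thesis by (intro exI[of _ 1]) simp
next
  case False
  then have "a \<odot> b = - (b \<odot> a)" using assms by (simp add: coorthogonal_def)
  then show ?thesis by (intro exI[of _ "-1"]) simp
qed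

lemma cdecs_Cons: "cdecs Pos (b # bs) (t # ts) X = cdecs Pos bs ts (cdec Pos b t X)"
  by (simp add: cdecs_def)
lemma cdecs_Nil[simp]: "cdecs Pos [] ts X = X" "cdecs Pos bs [] X = X"
  by (simp_all add: cdecs_def)

lemma bl_cdec: "bounded_linear (cdec Pos b t)"
  unfolding cdec_def
  by (intro bounded_linear_const_scaleR bounded_linear_add bounded_linear_ident
      bounded_bilinear.bounded_linear_right[OF bb_gprod, THEN bounded_linear_compose]
      bounded_bilinear.bounded_linear_left[OF bb_gprod])

lemma bl_cdecs: "bounded_linear (cdecs Pos bs ts)"
proof (induction bs arbitrary: ts)
  case Nil then show ?case by (simp add: bounded_linear_ident)
next
  case (Cons b bs) then show ?case
    by (cases ts) (auto simp: cdecs_Cons bounded_linear_ident intro: bounded_linear_compose[OF _ bl_cdec])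
qed

lemma cdecs_pres:
  assumes "\<forall>b\<in>set bs. b \<in> sqneg Pos \<and> coorthogonal Pos b' b"
    and "b' \<odot> Y = \<sigma> *\<^sub>R (Y \<odot> b')"
  shows "b' \<odot> cdecs Pos bs ts Y = \<sigma> *\<^sub>R (cdecs Pos bs ts Y \<odot> b')"
  using assms
proof (induction bs arbitrary: ts Y)
  case Nil then show ?case by simp
next
  case (Cons b bs)
  show ?case
  proof (cases ts)
    case Nil then show ?thesis using Cons.prems by simp
  next
    case (Cons t ts')
    obtain \<epsilon> where e: "\<epsilon> * \<epsilon> = 1" "b' \<odot> b = \<epsilon> *\<^sub>R (b \<odot> b')"
      using coorth_eps Cons.prems(1) by force
    have "b' \<odot> cdec Pos b t Y = \<sigma> *\<^sub>R (cdec Pos b t Y \<odot> b')"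
      using Cons.prems e by (intro cdec_pres) auto
    then show ?thesis using Cons.IH Cons.prems(1) \<open>ts = t # ts'\<close> by (simp add: cdecs_Cons)
  qed
qed

lemma cdecs_prop:
  assumes "\<forall>b\<in>set bs. b \<in> sqneg Pos"
    and "\<forall>k<length bs. \<forall>k'<length bs. k \<noteq> k' \<longrightarrow> coorthogonal Pos (bs ! k) (bs ! k')"
    and "length ts = length bs" "k < length bs"
  shows "bs ! k \<odot> cdecs Pos bs ts X = sgnb (ts ! k) *\<^sub>R (cdecs Pos bs ts X \<odot> bs ! k)"
  using assms
proof (induction bs arbitrary: ts X k)
  case Nil then show ?case by simp
next
  case (Cons b bs)
  obtain t ts' where ts: "ts = t # ts'" using Cons.prems(3) by (cases ts) auto
  show ?case
  proof (cases k)
    case 0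
    have "b \<odot> cdecs Pos bs ts' (cdec Pos b t X) = sgnb t *\<^sub>R (cdecs Pos bs ts' (cdec Pos b t X) \<odot> b)"
    proof (rule cdecs_pres)
      show "\<forall>b'\<in>set bs. b' \<in> sqneg Pos \<and> coorthogonal Pos b b'"
      proof
        fix b' assume "b' \<in> set bs"
        then obtain k' where "k' < length bs" "b' = bs ! k'" by (auto simp: in_set_conv_nth)
        then show "b' \<in> sqneg Pos \<and> coorthogonal Pos b b'"
          using Cons.prems(1) Cons.prems(2)[rule_format, of 0 "Suc k'"] \<open>b' \<in> set bs\<close> by auto
      qed
      show "b \<odot> cdec Pos b t X = sgnb t *\<^sub>R (cdec Pos b t X \<odot> b)"
        using Cons.prems(1) by (intro cdec_prop) auto
    qed
    then show ?thesis using 0 ts by (simp add: cdecs_Cons)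
  next
    case (Suc k')
    have "bs ! k' \<odot> cdecs Pos bs ts' (cdec Pos b t X) = sgnb (ts' ! k') *\<^sub>R (cdecs Pos bs ts' (cdec Pos b t X) \<odot> bs ! k')"
    proof (rule Cons.IH)
      show "\<forall>k<length bs. \<forall>k'<length bs. k \<noteq> k' \<longrightarrow> coorthogonal Pos (bs ! k) (bs ! k')"
        using Cons.prems(2) by (metis Suc_less_eq length_Cons nat.inject nth_Cons_Suc)
    qed (use Cons.prems ts Suc in auto)
    then show ?thesis using Suc ts by (simp add: cdecs_Cons)
  qed
qed

lemma cdec_sum: "cdec Pos b False X + cdec Pos b True X = X"
  by (simp add: cdec_def vec_eq_iff field_simps)

lemma lists_Suc: "{ts. length ts = Suc n} = (\<lambda>(t, ts). t # ts) ` (UNIV \<times> {ts. length ts = n})"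
  by (auto simp: length_Suc_conv image_iff)

lemma cdecs_sum: "(\<Sum>ts\<in>{ts. length ts = length bs}. cdecs Pos bs ts X) = X"
proof (induction bs arbitrary: X)
  case Nil then show ?case by simp
next
  case (Cons b bs)
  have inj: "inj_on (\<lambda>(t, ts). t # ts) (UNIV \<times> {ts. length ts = length bs})"
    by (auto simp: inj_on_def)
  have "(\<Sum>ts\<in>{ts. length ts = length (b # bs)}. cdecs Pos (b # bs) ts X)
      = (\<Sum>(t, ts)\<in>UNIV \<times> {ts. length ts = length bs}. cdecs Pos bs ts (cdec Pos b t X))"
    by (simp only: length_Cons lists_Suc sum.reindex[OF inj]) (simp add: case_prod_unfold cdecs_Cons)
  also have "\<dots> = (\<Sum>t\<in>UNIV. \<Sum>ts\<in>{ts. length ts = length bs}. cdecs Pos bs ts (cdec Pos b t X))"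
    by (simp add: sum.cartesian_product)
  also have "\<dots> = (\<Sum>t\<in>UNIV. cdec Pos b t X)" by (simp add: Cons.IH)
  also have "\<dots> = X" by (simp add: UNIV_bool cdec_sum add.commute)
  finally show ?case .
qed

end


lemma gprod_cont[continuous_intros]:
  "continuous_on S f \<Longrightarrow> continuous_on S g \<Longrightarrow> continuous_on S (\<lambda>x. gprod Pos (f x) (g x))"
  by (rule bounded_bilinear.continuous_on[OF bb_gprod])

lemma gprod_meas[measurable (raw)]:
  fixes f g :: "'a \<Rightarrow> ('n::{finite,linorder}) mv"
  shows "f \<in> borel_measurable M \<Longrightarrow> g \<in> borel_measurable M \<Longrightarrow> (\<lambda>x. gprod Pos (f x) (g x)) \<in> borel_measurable M"
  by (rule borel_measurable_continuous_Pair) (auto intro!: continuous_intros)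

lemma transl_integral:
  fixes g :: "'a::euclidean_space \<Rightarrow> 'b::{banach, second_countable_topology}"
  assumes "g \<in> borel_measurable borel"
  shows "(\<integral>z. g (y + z) \<partial>lborel) = integral\<^sup>L lborel g"
proof -
  have "integral\<^sup>L lborel g = integral\<^sup>L (distr lborel borel ((+) y)) g" by (simp add: lborel_distr_plus)
  also have "\<dots> = (\<integral>z. g (y + z) \<partial>lborel)" by (rule integral_distr) (use assms in auto)
  finally show ?thesis ..
qed

lemma transl_integrable:
  fixes g :: "'a::euclidean_space \<Rightarrow> 'b::{banach, second_countable_topology}"
  assumes "g \<in> borel_measurable borel"
  shows "integrable lborel (\<lambda>z. g (y + z)) \<longleftrightarrow> integrable lborel g"
proof -
  have "integrable lborel g \<longleftrightarrow> integrable (distr lborel borel ((+) y)) g" by (simp add: lborel_distr_plus)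
  also have "\<dots> \<longleftrightarrow> integrable lborel (\<lambda>z. g (y + z))" by (rule integrable_distr_eq) (use assms in auto)
  finally show ?thesis ..
qed

lemma theta_integrable:
  fixes B :: "'a::euclidean_space \<Rightarrow> 'b::{banach, second_countable_topology}"
    and C :: "'a \<Rightarrow> 'c::{banach, second_countable_topology}"
  assumes B: "integrable lborel B" and C: "integrable lborel C"
  shows "integrable (lborel \<Otimes>\<^sub>M lborel) (\<lambda>(y, x). c * (norm (C y) * norm (B (x - y))))"
proof -
  have Bm[measurable]: "B \<in> borel_measurable borel" using B by auto
  have Cm[measurable]: "C \<in> borel_measurable borel" using C by auto
  have ti: "integrable lborel (\<lambda>x. norm (B (x - y)))" for y
  proof -
    have "integrable lborel (\<lambda>x. norm (B (- y + x)))"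
      by (subst transl_integrable) (auto intro: B)
    then show ?thesis by simp
  qed
  have tI: "(\<integral>x. norm (B (x - y)) \<partial>lborel) = (\<integral>x. norm (B x) \<partial>lborel)" for y
  proof -
    have "(\<integral>x. norm (B (- y + x)) \<partial>lborel) = (\<integral>x. norm (B x) \<partial>lborel)"
      by (rule transl_integral) simp
    then show ?thesis by simp
  qed
  show ?thesis
  proof (rule lborel_pair.Fubini_integrable)
    show "(\<lambda>(y, x). c * (norm (C y) * norm (B (x - y)))) \<in> borel_measurable (lborel \<Otimes>\<^sub>M lborel)"
      by measurable
    have "(\<lambda>y. \<integral>x. norm (case (y, x) of (y, x) \<Rightarrow> c * (norm (C y) * norm (B (x - y)))) \<partial>lborel)
        = (\<lambda>y. (\<bar>c\<bar> * norm (C y)) * (\<integral>x. norm (B x) \<partial>lborel))"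
      by (rule ext) (simp add: abs_mult tI mult.assoc)
    moreover have "integrable lborel (\<lambda>y. (\<bar>c\<bar> * norm (C y)) * (\<integral>x. norm (B x) \<partial>lborel))"
      using C by auto
    ultimately show "integrable lborel (\<lambda>y. \<integral>x. norm (case (y, x) of (y, x) \<Rightarrow> c * (norm (C y) * norm (B (x - y)))) \<partial>lborel)"
      by simp
    show "AE y in lborel. integrable lborel (\<lambda>x. case (y, x) of (y, x) \<Rightarrow> c * (norm (C y) * norm (B (x - y))))"
      using ti by auto
  qed
qed


lemma norm_gp3:
  assumes K: "K > 0" "\<forall>a b. norm (gprod Pos a b) \<le> norm a * norm b * K"
  shows "norm (gprod Pos (gprod Pos a (gprod Pos b c)) d) \<le> norm a * norm b * norm c * norm d * (K * K * K)"
proof -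
  have "norm (gprod Pos (gprod Pos a (gprod Pos b c)) d) \<le> norm (gprod Pos a (gprod Pos b c)) * norm d * K"
    using K by blast
  also have "\<dots> \<le> (norm a * norm (gprod Pos b c) * K) * norm d * K"
    using K by (intro mult_right_mono) auto
  also have "\<dots> \<le> (norm a * (norm b * norm c * K) * K) * norm d * K"
    using K by (intro mult_right_mono mult_left_mono) auto
  finally show ?thesis by (simp add: ac_simps)
qed

lemma conv_main:
  fixes P Q :: "real^'m \<Rightarrow> ('n::{finite,linorder}) mv" and B C :: "real^'m \<Rightarrow> 'n mv"
    and G H :: "'p \<Rightarrow> real^'m \<Rightarrow> 'n mv" and S :: "'p set"
  assumes B: "integrable lborel B" and C: "integrable lborel C"
    and Pc: "continuous_on UNIV P" and Qc: "continuous_on UNIV Q"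
    and Pb: "\<forall>x. norm (P x) \<le> KP" and Qb: "\<forall>x. norm (Q x) \<le> KQ"
    and S: "finite S" and G: "\<forall>p\<in>S. integrable lborel (G p)" and H: "\<forall>p\<in>S. integrable lborel (H p)"
    and eq: "\<forall>y z. gprod Pos (gprod Pos (P (y + z)) (gprod Pos (C y) (B z))) (Q (y + z))
                 = (\<Sum>p\<in>S. gprod Pos (G p y) (H p z))"
  shows "(\<integral>x. gprod Pos (gprod Pos (P x) (gconv Pos C B x)) (Q x) \<partial>lborel)
       = (\<Sum>p\<in>S. gprod Pos (\<integral>y. G p y \<partial>lborel) (\<integral>z. H p z \<partial>lborel))"
proof -
  obtain K where K: "K > 0" "\<forall>a b. norm (gprod Pos a b) \<le> norm a * norm b * K"
    using bounded_bilinear.pos_bounded[OF bb_gprod] by blast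
  have Bm[measurable]: "B \<in> borel_measurable borel" using B by auto
  have Cm[measurable]: "C \<in> borel_measurable borel" using C by auto
  have Pm[measurable]: "P \<in> borel_measurable borel" using Pc by (rule borel_measurable_continuous_onI)
  have Qm[measurable]: "Q \<in> borel_measurable borel" using Qc by (rule borel_measurable_continuous_onI)
  have KP: "KP \<ge> 0" using Pb norm_ge_zero order_trans by blast
  have KQ: "KQ \<ge> 0" using Qb norm_ge_zero order_trans by blast
  define \<Phi> where "\<Phi> = (\<lambda>y x. gprod Pos (C y) (B (x - y)))"
  define \<Psi> where "\<Psi> = (\<lambda>y x. gprod Pos (gprod Pos (P x) (gprod Pos (C y) (B (x - y)))) (Q x))"
  have \<Phi>m[measurable]: "case_prod \<Phi> \<in> borel_measurable (lborel \<Otimes>\<^sub>M lborel)"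
    unfolding \<Phi>_def by measurable
  have \<Psi>m[measurable]: "case_prod \<Psi> \<in> borel_measurable (lborel \<Otimes>\<^sub>M lborel)"
    unfolding \<Psi>_def by measurable
  have \<Phi>i: "integrable (lborel \<Otimes>\<^sub>M lborel) (case_prod \<Phi>)"
  proof (rule Bochner_Integration.integrable_bound[OF theta_integrable[OF B C, of K]])
    show "AE p in lborel \<Otimes>\<^sub>M lborel. norm (case_prod \<Phi> p) \<le> norm (case p of (y, x) \<Rightarrow> K * (norm (C y) * norm (B (x - y))))"
      using K by (auto simp: \<Phi>_def abs_mult ac_simps)
  qed simp
  have \<Psi>i: "integrable (lborel \<Otimes>\<^sub>M lborel) (case_prod \<Psi>)"
  proof (rule Bochner_Integration.integrable_bound[OF theta_integrable[OF B C, of "KP * KQ * (K * K * K)"]])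
    show "AE p in lborel \<Otimes>\<^sub>M lborel. norm (case_prod \<Psi> p) \<le> norm (case p of (y, x) \<Rightarrow> KP * KQ * (K * K * K) * (norm (C y) * norm (B (x - y))))"
    proof -
      have bnd: "norm (\<Psi> y x) \<le> norm (KP * KQ * (K * K * K) * (norm (C y) * norm (B (x - y))))" for y x
      proof -
        have "norm (\<Psi> y x) \<le> norm (P x) * norm (C y) * norm (B (x - y)) * norm (Q x) * (K * K * K)"
          unfolding \<Psi>_def by (rule norm_gp3[OF K])
        also have "\<dots> \<le> KP * norm (C y) * norm (B (x - y)) * KQ * (K * K * K)"
          using Pb Qb K KP by (intro mult_right_mono mult_left_mono mult_mono) auto
        also have "\<dots> = norm (KP * KQ * (K * K * K) * (norm (C y) * norm (B (x - y))))"
          using KP KQ K by (simp add: abs_mult ac_simps)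
        finally show ?thesis .
      qed
      then show ?thesis by (auto intro!: AE_I2 split: prod.split)
    qed
  qed simp
  have stepA: "(\<integral>x. gprod Pos (gprod Pos (P x) (gconv Pos C B x)) (Q x) \<partial>lborel) = (\<integral>x. \<integral>y. \<Psi> y x \<partial>lborel \<partial>lborel)"
  proof (rule integral_cong_AE)
    show "(\<lambda>x. gprod Pos (gprod Pos (P x) (gconv Pos C B x)) (Q x)) \<in> borel_measurable lborel"
      unfolding gconv_def by measurable
    show "(\<lambda>x. \<integral>y. \<Psi> y x \<partial>lborel) \<in> borel_measurable lborel"
      by measurable
    show "AE x in lborel. gprod Pos (gprod Pos (P x) (gconv Pos C B x)) (Q x) = (\<integral>y. \<Psi> y x \<partial>lborel)"
      using lborel_pair.AE_integrable_snd[OF \<Phi>i]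
    proof eventually_elim
      case (elim x)
      have bl: "bounded_linear (\<lambda>v. gprod Pos (gprod Pos (P x) v) (Q x))"
        by (intro bounded_linear_compose[OF bounded_bilinear.bounded_linear_left[OF bb_gprod]]
            bounded_bilinear.bounded_linear_right[OF bb_gprod])
      show ?case
        unfolding \<Psi>_def gconv_def
        using integral_bounded_linear[OF bl elim] by (simp add: \<Phi>_def)
    qed
  qed
  have stepB: "(\<integral>x. \<integral>y. \<Psi> y x \<partial>lborel \<partial>lborel) = (\<integral>y. \<integral>x. \<Psi> y x \<partial>lborel \<partial>lborel)"
    using lborel_pair.integral_snd[OF \<Psi>i] lborel_pair.integral_fst[OF \<Psi>i] by simp
  have stepC: "(\<integral>x. \<Psi> y x \<partial>lborel) = (\<Sum>p\<in>S. gprod Pos (G p y) (\<integral>z. H p z \<partial>lborel))" for y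
  proof -
    have "(\<integral>x. \<Psi> y x \<partial>lborel) = (\<integral>z. \<Psi> y (y + z) \<partial>lborel)"
      by (rule transl_integral[symmetric]) (simp add: \<Psi>_def)
    also have "\<dots> = (\<integral>z. (\<Sum>p\<in>S. gprod Pos (G p y) (H p z)) \<partial>lborel)"
      using eq by (simp add: \<Psi>_def)
    also have "\<dots> = (\<Sum>p\<in>S. \<integral>z. gprod Pos (G p y) (H p z) \<partial>lborel)"
      using H by (intro Bochner_Integration.integral_sum[where f="\<lambda>p z. gprod Pos (G p y) (H p z)"]) (auto intro: integrable_bounded_linear[OF bounded_bilinear.bounded_linear_right[OF bb_gprod]])
    also have "\<dots> = (\<Sum>p\<in>S. gprod Pos (G p y) (\<integral>z. H p z \<partial>lborel))"
      using H by (intro sum.cong refl integral_bounded_linear[OF bounded_bilinear.bounded_linear_right[OF bb_gprod]]) auto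
    finally show ?thesis .
  qed
  have stepD: "(\<integral>y. (\<Sum>p\<in>S. gprod Pos (G p y) (\<integral>z. H p z \<partial>lborel)) \<partial>lborel)
      = (\<Sum>p\<in>S. gprod Pos (\<integral>y. G p y \<partial>lborel) (\<integral>z. H p z \<partial>lborel))"
  proof -
    have "(\<integral>y. (\<Sum>p\<in>S. gprod Pos (G p y) (\<integral>z. H p z \<partial>lborel)) \<partial>lborel)
        = (\<Sum>p\<in>S. \<integral>y. gprod Pos (G p y) (\<integral>z. H p z \<partial>lborel) \<partial>lborel)"
      using G by (intro Bochner_Integration.integral_sum[where f="\<lambda>p y. gprod Pos (G p y) (\<integral>z. H p z \<partial>lborel)"]) (auto intro: integrable_bounded_linear[OF bounded_bilinear.bounded_linear_left[OF bb_gprod]])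
    also have "\<dots> = (\<Sum>p\<in>S. gprod Pos (\<integral>y. G p y \<partial>lborel) (\<integral>z. H p z \<partial>lborel))"
      using G by (intro sum.cong refl integral_bounded_linear[OF bounded_bilinear.bounded_linear_left[OF bb_gprod]]) auto
    finally show ?thesis .
  qed
  show ?thesis using stepA stepB stepC stepD by simp
qed


context fixes Pos :: "('n::{finite,linorder}) set" begin

abbreviation gp4 (infixl "\<odot>" 70) where "x \<odot> y \<equiv> gprod Pos x y"

lemma gl_Nil[simp]: "gprod_list Pos [] = scal 1" by (simp add: gprod_list_def)
lemma gl_Cons[simp]: "gprod_list Pos (x # xs) = x \<odot> gprod_list Pos xs" by (simp add: gprod_list_def)

lemma gl_pass:
  assumes "\<forall>l\<in>set ls. a l \<odot> Y = Y \<odot> a' l"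
  shows "gprod_list Pos (map a ls) \<odot> Y = Y \<odot> gprod_list Pos (map a' ls)"
  using assms
proof (induction ls)
  case Nil then show ?case by simp
next
  case (Cons l ls)
  have ih: "gprod_list Pos (map a ls) \<odot> Y = Y \<odot> gprod_list Pos (map a' ls)" using Cons by simp
  have h: "a l \<odot> Y = Y \<odot> a' l" using Cons.prems by simp
  have "gprod_list Pos (map a (l # ls)) \<odot> Y = a l \<odot> (gprod_list Pos (map a ls) \<odot> Y)"
    by (simp add: gprod_assoc)
  also have "\<dots> = (a l \<odot> Y) \<odot> gprod_list Pos (map a' ls)" by (simp only: ih gprod_assoc)
  also have "\<dots> = Y \<odot> gprod_list Pos (map a' (l # ls))" by (simp only: h gprod_assoc gl_Cons list.map)
  finally show ?case .
qed

lemma gl_split: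
  assumes "\<forall>l\<in>set ls. \<forall>l'\<in>set ls. b l \<odot> a l' = a l' \<odot> b l"
  shows "gprod_list Pos (map (\<lambda>l. a l \<odot> b l) ls) = gprod_list Pos (map a ls) \<odot> gprod_list Pos (map b ls)"
  using assms
proof (induction ls)
  case Nil then show ?case by simp
next
  case (Cons l ls)
  have c: "b l \<odot> gprod_list Pos (map a ls) = gprod_list Pos (map a ls) \<odot> b l"
    using gl_pass[of ls a "b l" a] Cons.prems by simp
  have "gprod_list Pos (map (\<lambda>l. a l \<odot> b l) (l # ls)) = a l \<odot> (b l \<odot> (gprod_list Pos (map a ls) \<odot> gprod_list Pos (map b ls)))"
    using Cons by (simp add: gprod_assoc)
  also have "\<dots> = a l \<odot> (gprod_list Pos (map a ls) \<odot> (b l \<odot> gprod_list Pos (map b ls)))"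
    by (simp add: gprod_assoc[symmetric] c)
  finally show ?case by (simp add: gprod_assoc)
qed

lemma gl_center:
  assumes "\<forall>l\<in>set ls. a l \<in> gcenter Pos"
  shows "gprod_list Pos (map a ls) \<in> gcenter Pos"
  using assms
proof (induction ls)
  case Nil then show ?case by (simp add: gcenter_def)
next
  case (Cons l ls)
  then have a: "\<forall>y. a l \<odot> y = y \<odot> a l" and g: "\<forall>y. gprod_list Pos (map a ls) \<odot> y = y \<odot> gprod_list Pos (map a ls)"
    by (auto simp: gcenter_def)
  show ?case unfolding gcenter_def mem_Collect_eq
  proof
    fix y
    have "gprod_list Pos (map a (l # ls)) \<odot> y = a l \<odot> (y \<odot> gprod_list Pos (map a ls))"
      using g by (simp add: gprod_assoc)
    also have "\<dots> = y \<odot> gprod_list Pos (map a (l # ls))"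
      using a[rule_format, of y] by (simp add: gprod_assoc[symmetric])
    finally show "gprod_list Pos (map a (l # ls)) \<odot> y = y \<odot> gprod_list Pos (map a (l # ls))" .
  qed
qed

definition good :: "('x::t2_space \<Rightarrow> 'n mv) \<Rightarrow> bool" where
  "good P \<longleftrightarrow> continuous_on UNIV P \<and> (\<exists>c. \<forall>x. norm (P x) \<le> c)"

lemma good_gprod: "good P \<Longrightarrow> good Q \<Longrightarrow> good (\<lambda>x. P x \<odot> Q x)"
proof -
  assume P: "good P" and Q: "good Q"
  obtain K where K: "K > 0" "\<forall>a b. norm (a \<odot> b) \<le> norm a * norm b * K"
    using bounded_bilinear.pos_bounded[OF bb_gprod] by blast
  obtain c1 where c1: "\<forall>x. norm (P x) \<le> c1" using P by (auto simp: good_def)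
  obtain c2 where c2: "\<forall>x. norm (Q x) \<le> c2" using Q by (auto simp: good_def)
  have "norm (P x \<odot> Q x) \<le> c1 * c2 * K" for x
  proof -
    have "norm (P x \<odot> Q x) \<le> norm (P x) * norm (Q x) * K" using K by blast
    also have "\<dots> \<le> c1 * c2 * K" using c1 c2 K
      by (intro mult_right_mono mult_mono) (auto intro: order_trans[OF norm_ge_zero])
    finally show ?thesis .
  qed
  then show ?thesis using P Q unfolding good_def by (auto intro!: continuous_intros)
qed

lemma good_gl:
  assumes "\<forall>l\<in>set ls. good (a l)"
  shows "good (\<lambda>x. gprod_list Pos (map (\<lambda>l. a l x) ls))"
  using assms
proof (induction ls)
  case Nil then show ?case by (auto simp: good_def intro: continuous_intros)
next
  case (Cons l ls)
  then show ?case by (simp add: good_gprod)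
qed

lemma good_EE:
  assumes "i \<in> sqneg Pos" "continuous_on UNIV g"
  shows "good (\<lambda>x. EE Pos i (g x))"
proof -
  have w: "ww Pos i > 0" using sqnegD(2)[OF assms(1)] .
  have "norm (EE Pos i t) \<le> norm (scal 1 :: 'n mv) + norm i / ww Pos i" for t
  proof -
    have "norm (EE Pos i t) \<le> norm (cos (t * ww Pos i) *\<^sub>R (scal 1 :: 'n mv)) + norm ((sin (t * ww Pos i) / ww Pos i) *\<^sub>R i)"
      unfolding EE_def by (rule norm_triangle_ineq)
    also have "\<dots> \<le> norm (scal 1 :: 'n mv) + norm i / ww Pos i"
      using w by (intro add_mono) (auto simp: abs_mult divide_le_cancel intro!: mult_left_le_one_le mult_le_one)
    finally show ?thesis .
  qed
  moreover have "continuous_on UNIV (\<lambda>x. EE Pos i (g x))"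
  proof -
    have gc: "continuous_on UNIV (\<lambda>x. g x * ww Pos i)" by (intro continuous_intros assms(2))
    show ?thesis unfolding EE_def using w
      by (intro continuous_on_add continuous_on_scaleR continuous_on_const continuous_on_cos[OF gc]
          continuous_on_divide continuous_on_sin[OF gc]) auto
  qed
  ultimately show ?thesis unfolding good_def by blast
qed

lemma good_integrable:
  fixes D :: "real^'m \<Rightarrow> 'n mv"
  assumes "good P" "good Q" "integrable lborel D"
  shows "integrable lborel (\<lambda>x. (P x \<odot> D x) \<odot> Q x)"
proof -
  obtain K where K: "K > 0" "\<forall>a b. norm (a \<odot> b) \<le> norm a * norm b * K"
    using bounded_bilinear.pos_bounded[OF bb_gprod] by blast
  obtain c1 where c1: "\<forall>x. norm (P x) \<le> c1" using assms by (auto simp: good_def)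
  obtain c2 where c2: "\<forall>x. norm (Q x) \<le> c2" using assms by (auto simp: good_def)
  have c1p: "c1 \<ge> 0" using c1 norm_ge_zero order_trans by blast
  have c2p: "c2 \<ge> 0" using c2 norm_ge_zero order_trans by blast
  have Pm[measurable]: "P \<in> borel_measurable borel" using assms(1) by (auto simp: good_def intro: borel_measurable_continuous_onI)
  have Qm[measurable]: "Q \<in> borel_measurable borel" using assms(2) by (auto simp: good_def intro: borel_measurable_continuous_onI)
  have Dm[measurable]: "D \<in> borel_measurable borel" using assms(3) by auto
  show ?thesis
  proof (rule Bochner_Integration.integrable_bound[where f="\<lambda>x. (c1 * c2 * K * K) *\<^sub>R D x"])
    show "integrable lborel (\<lambda>x. (c1 * c2 * K * K) *\<^sub>R D x)" using assms(3) by simp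
    show "(\<lambda>x. (P x \<odot> D x) \<odot> Q x) \<in> borel_measurable lborel" by measurable
    show "AE x in lborel. norm ((P x \<odot> D x) \<odot> Q x) \<le> norm ((c1 * c2 * K * K) *\<^sub>R D x)"
    proof (rule AE_I2)
      fix x
      have "norm ((P x \<odot> D x) \<odot> Q x) \<le> norm (P x \<odot> D x) * norm (Q x) * K" using K by blast
      also have "\<dots> \<le> (norm (P x) * norm (D x) * K) * norm (Q x) * K"
        using K by (intro mult_right_mono) auto
      also have "\<dots> \<le> (c1 * norm (D x) * K) * c2 * K"
        using K c1 c2 c1p by (intro mult_right_mono mult_mono) auto
      also have "\<dots> = norm ((c1 * c2 * K * K) *\<^sub>R D x)" using K c1p c2p by (simp add: abs_mult ac_simps)
      finally show "norm ((P x \<odot> D x) \<odot> Q x) \<le> norm ((c1 * c2 * K * K) *\<^sub>R D x)" .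
    qed
  qed
qed

end


lemma finite_bool_lists: "finite {js :: bool list. length js = n}"
  using finite_lists_length_eq[of "UNIV :: bool set" n] by simp

locale cor_setup =
  fixes Pos :: "('n::{finite,linorder}) set"
    and mu nu :: nat
    and s :: "nat \<Rightarrow> real^'m \<Rightarrow> real^'m \<Rightarrow> real"
    and i :: "nat \<Rightarrow> real^'m \<Rightarrow> 'n mv"
    and f :: "nat \<Rightarrow> real^'m \<Rightarrow> real^'m \<Rightarrow> 'n mv"
  assumes munu: "mu \<le> nu"
    and f_def: "\<And>l x v. l \<in> {1..nu} \<Longrightarrow> f l x v = s l x v *\<^sub>R i l v"
    and s_lin: "\<And>l v. l \<in> {1..nu} \<Longrightarrow> linear (\<lambda>x. s l x v)"
    and i_sq: "\<And>l v. l \<in> {1..nu} \<Longrightarrow> i l v \<in> sqneg Pos"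
    and i_coorth: "\<And>l l' v. l \<in> {1..nu} \<Longrightarrow> l' \<in> {1..nu} \<Longrightarrow> l \<noteq> l' \<Longrightarrow>
                     coorthogonal Pos (i l v) (i l' v)"
    and i_comm1: "\<And>l l' v. l \<in> {1..mu} \<Longrightarrow> l' \<in> {1..mu} \<Longrightarrow>
                     gprod Pos (i l v) (i l' v) = gprod Pos (i l' v) (i l v)"
    and i_comm2: "\<And>l l' v. l \<in> {mu+1..nu} \<Longrightarrow> l' \<in> {mu+1..nu} \<Longrightarrow>
                     gprod Pos (i l v) (i l' v) = gprod Pos (i l' v) (i l v)"
begin

abbreviation gp6 (infixl "\<odot>" 70) where "x \<odot> y \<equiv> gprod Pos x y"

definition Lf :: "real^'m \<Rightarrow> bool list \<Rightarrow> real^'m \<Rightarrow> 'n mv" where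
  "Lf u sig x = gprod_list Pos (map (\<lambda>l. gexp Pos (- (sgnb (sig ! (l - 1))) *\<^sub>R f l x u)) [1..<mu+1])"
definition Rf :: "real^'m \<Rightarrow> bool list \<Rightarrow> real^'m \<Rightarrow> 'n mv" where
  "Rf u tau x = gprod_list Pos (map (\<lambda>l. gexp Pos (- (sgnb (tau ! (l - mu - 1))) *\<^sub>R f l x u)) [mu+1..<nu+1])"

definition bs1 :: "real^'m \<Rightarrow> 'n mv list" where "bs1 u = map (\<lambda>l. i l u) [1..<mu+1]"
definition bs2 :: "real^'m \<Rightarrow> 'n mv list" where "bs2 u = map (\<lambda>l. i l u) [mu+1..<nu+1]"

abbreviation "J1 \<equiv> {js :: bool list. length js = mu}"
abbreviation "J2 \<equiv> {ks :: bool list. length ks = nu - mu}"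
abbreviation "r1 \<equiv> replicate mu False"
abbreviation "r2 \<equiv> replicate (nu - mu) False"

lemma FT_eq: "FT Pos f mu nu sig tau D u = (\<integral>x. (Lf u sig x \<odot> D x) \<odot> Rf u tau x \<partial>lborel)"
  by (simp add: FT_def Lf_def Rf_def)

lemma in1: "l \<in> set [1..<mu+1] \<Longrightarrow> l \<in> {1..nu}" using munu by auto
lemma in2: "l \<in> set [mu+1..<nu+1] \<Longrightarrow> l \<in> {1..nu}" using munu by auto

lemma Lf_EE: "Lf u sig x = gprod_list Pos (map (\<lambda>l. EE Pos (i l u) (- sgnb (sig ! (l - 1)) * s l x u)) [1..<mu+1])"
  unfolding Lf_def
proof (intro arg_cong[where f="gprod_list Pos"] map_cong refl)
  fix l assume l: "l \<in> set [1..<mu+1]"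
  show "gexp Pos (- (sgnb (sig ! (l - 1))) *\<^sub>R f l x u) = EE Pos (i l u) (- sgnb (sig ! (l - 1)) * s l x u)"
    by (simp only: f_def[OF in1[OF l]] gexp_scaled[OF i_sq[OF in1[OF l]]])
qed

lemma Rf_EE: "Rf u tau x = gprod_list Pos (map (\<lambda>l. EE Pos (i l u) (- sgnb (tau ! (l - mu - 1)) * s l x u)) [mu+1..<nu+1])"
  unfolding Rf_def
proof (intro arg_cong[where f="gprod_list Pos"] map_cong refl)
  fix l assume l: "l \<in> set [mu+1..<nu+1]"
  show "gexp Pos (- (sgnb (tau ! (l - mu - 1))) *\<^sub>R f l x u) = EE Pos (i l u) (- sgnb (tau ! (l - mu - 1)) * s l x u)"
    by (simp only: f_def[OF in2[OF l]] gexp_scaled[OF i_sq[OF in2[OF l]]])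
qed

lemma len_bs1[simp]: "length (bs1 u) = mu" by (simp add: bs1_def)
lemma len_bs2[simp]: "length (bs2 u) = nu - mu" by (simp add: bs2_def del: upt_Suc)
lemma nth_bs1: "k < mu \<Longrightarrow> bs1 u ! k = i (k + 1) u" by (simp add: bs1_def del: upt_Suc)
lemma nth_bs2: "k < nu - mu \<Longrightarrow> bs2 u ! k = i (mu + 1 + k) u" using munu by (simp add: bs2_def del: upt_Suc)

lemma bs1_sq: "\<forall>b\<in>set (bs1 u). b \<in> sqneg Pos" by (auto simp: bs1_def intro: i_sq[OF in1])
lemma bs2_sq: "\<forall>b\<in>set (bs2 u). b \<in> sqneg Pos" by (auto simp: bs2_def intro: i_sq[OF in2])
lemma bs1_co: "\<forall>k<length (bs1 u). \<forall>k'<length (bs1 u). k \<noteq> k' \<longrightarrow> coorthogonal Pos (bs1 u ! k) (bs1 u ! k')"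
  using munu by (auto simp: nth_bs1 intro!: i_coorth)
lemma bs2_co: "\<forall>k<length (bs2 u). \<forall>k'<length (bs2 u). k \<noteq> k' \<longrightarrow> coorthogonal Pos (bs2 u ! k) (bs2 u ! k')"
  using munu by (auto simp: nth_bs2 intro!: i_coorth)

lemma pass1: "Lf u r1 z \<odot> W = (\<Sum>j\<in>J1. cdecs Pos (bs1 u) j W \<odot> Lf u j z)"
proof -
  have "Lf u r1 z \<odot> W = Lf u r1 z \<odot> (\<Sum>j\<in>J1. cdecs Pos (bs1 u) j W)"
    using cdecs_sum[of Pos "bs1 u" W] by simp
  also have "\<dots> = (\<Sum>j\<in>J1. Lf u r1 z \<odot> cdecs Pos (bs1 u) j W)" by (simp add: gp_sum_right)
  also have "\<dots> = (\<Sum>j\<in>J1. cdecs Pos (bs1 u) j W \<odot> Lf u j z)"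
  proof (rule sum.cong[OF refl])
    fix j assume "j \<in> J1"
    then have lj: "length j = mu" by simp
    show "Lf u r1 z \<odot> cdecs Pos (bs1 u) j W = cdecs Pos (bs1 u) j W \<odot> Lf u j z"
      unfolding Lf_EE
    proof (rule gl_pass, rule ballI)
      fix l assume l: "l \<in> set [1..<mu+1]"
      then have k: "l - 1 < mu" "l - 1 + 1 = l" by auto
      have pr: "i l u \<odot> cdecs Pos (bs1 u) j W = sgnb (j ! (l - 1)) *\<^sub>R (cdecs Pos (bs1 u) j W \<odot> i l u)"
        using cdecs_prop[OF bs1_sq bs1_co, where ts=j and k="l - 1" and X=W] lj k by (simp add: nth_bs1)
      have e: "sgnb (j ! (l - 1)) * (- sgnb (r1 ! (l - 1)) * s l z u) = - sgnb (j ! (l - 1)) * s l z u"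
        using k by (simp add: sgnb_def)
      show "EE Pos (i l u) (- sgnb (r1 ! (l - 1)) * s l z u) \<odot> cdecs Pos (bs1 u) j W =
          cdecs Pos (bs1 u) j W \<odot> EE Pos (i l u) (- sgnb (j ! (l - 1)) * s l z u)"
        using EE_pass[OF pr sgnb_sq] e by metis
    qed
  qed
  finally show ?thesis .
qed

lemma pass2: "W \<odot> Rf u r2 y = (\<Sum>k\<in>J2. Rf u k y \<odot> cdecs Pos (bs2 u) k W)"
proof -
  have "W \<odot> Rf u r2 y = (\<Sum>k\<in>J2. cdecs Pos (bs2 u) k W) \<odot> Rf u r2 y"
    using cdecs_sum[of Pos "bs2 u" W] by simp
  also have "\<dots> = (\<Sum>k\<in>J2. cdecs Pos (bs2 u) k W \<odot> Rf u r2 y)" by (simp add: gp_sum_left)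
  also have "\<dots> = (\<Sum>k\<in>J2. Rf u k y \<odot> cdecs Pos (bs2 u) k W)"
  proof (rule sum.cong[OF refl])
    fix k assume "k \<in> J2"
    then have lk: "length k = nu - mu" by simp
    have "Rf u k y \<odot> cdecs Pos (bs2 u) k W = cdecs Pos (bs2 u) k W \<odot> Rf u r2 y"
      unfolding Rf_EE
    proof (rule gl_pass, rule ballI)
      fix l assume l: "l \<in> set [mu+1..<nu+1]"
      then have p: "l - mu - 1 < nu - mu" "mu + 1 + (l - mu - 1) = l" by auto
      have pr: "i l u \<odot> cdecs Pos (bs2 u) k W = sgnb (k ! (l - mu - 1)) *\<^sub>R (cdecs Pos (bs2 u) k W \<odot> i l u)"
        using cdecs_prop[OF bs2_sq bs2_co, where ts=k and k="l - mu - 1" and X=W] lk p by (simp add: nth_bs2)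
      have e: "sgnb (k ! (l - mu - 1)) * (- sgnb (k ! (l - mu - 1)) * s l y u) = - sgnb (r2 ! (l - mu - 1)) * s l y u"
        using p by (simp add: sgnb_def)
      show "EE Pos (i l u) (- sgnb (k ! (l - mu - 1)) * s l y u) \<odot> cdecs Pos (bs2 u) k W =
          cdecs Pos (bs2 u) k W \<odot> EE Pos (i l u) (- sgnb (r2 ! (l - mu - 1)) * s l y u)"
        using EE_pass[OF pr sgnb_sq] e by metis
    qed
    then show "cdecs Pos (bs2 u) k W \<odot> Rf u r2 y = Rf u k y \<odot> cdecs Pos (bs2 u) k W" ..
  qed
  finally show ?thesis .
qed

lemma s_add: "l \<in> {1..nu} \<Longrightarrow> s l (y + z) u = s l y u + s l z u"
  using linear_add[OF s_lin] by blast

lemma L_add: "Lf u r1 (y + z) = Lf u r1 y \<odot> Lf u r1 z"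
proof -
  have "Lf u r1 (y + z) = gprod_list Pos (map (\<lambda>l. EE Pos (i l u) (- s l y u) \<odot> EE Pos (i l u) (- s l z u)) [1..<mu+1])"
    unfolding Lf_EE
  proof (intro arg_cong[where f="gprod_list Pos"] map_cong refl)
    fix l assume l: "l \<in> set [1..<mu+1]"
    then have "l - 1 < mu" by auto
    then show "EE Pos (i l u) (- sgnb (r1 ! (l - 1)) * s l (y + z) u) = EE Pos (i l u) (- s l y u) \<odot> EE Pos (i l u) (- s l z u)"
      using l by (simp add: EE_add[OF i_sq[OF in1]] s_add[OF in1] sgnb_def del: upt_Suc)
  qed
  also have "\<dots> = Lf u r1 y \<odot> Lf u r1 z"
    unfolding Lf_EE
  proof (subst gl_split)
    show "\<forall>l\<in>set [1..<mu + 1]. \<forall>l'\<in>set [1..<mu + 1]. EE Pos (i l u) (- s l z u) \<odot> EE Pos (i l' u) (- s l' y u) = EE Pos (i l' u) (- s l' y u) \<odot> EE Pos (i l u) (- s l z u)"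
      by (auto intro!: EE_comm i_comm1)
  qed (intro arg_cong2[where f="gprod Pos"] arg_cong[where f="gprod_list Pos"] map_cong refl; auto simp: sgnb_def simp del: upt_Suc)+
  finally show ?thesis .
qed

lemma R_add: "Rf u r2 (y + z) = Rf u r2 y \<odot> Rf u r2 z"
proof -
  have "Rf u r2 (y + z) = gprod_list Pos (map (\<lambda>l. EE Pos (i l u) (- s l y u) \<odot> EE Pos (i l u) (- s l z u)) [mu+1..<nu+1])"
    unfolding Rf_EE
  proof (intro arg_cong[where f="gprod_list Pos"] map_cong refl)
    fix l assume l: "l \<in> set [mu+1..<nu+1]"
    then have "l - mu - 1 < nu - mu" by auto
    then show "EE Pos (i l u) (- sgnb (r2 ! (l - mu - 1)) * s l (y + z) u) = EE Pos (i l u) (- s l y u) \<odot> EE Pos (i l u) (- s l z u)"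
      using l by (simp add: EE_add[OF i_sq[OF in2]] s_add[OF in2] sgnb_def del: upt_Suc)
  qed
  also have "\<dots> = Rf u r2 y \<odot> Rf u r2 z"
    unfolding Rf_EE
  proof (subst gl_split)
    show "\<forall>l\<in>set [mu+1..<nu + 1]. \<forall>l'\<in>set [mu+1..<nu + 1]. EE Pos (i l u) (- s l z u) \<odot> EE Pos (i l' u) (- s l' y u) = EE Pos (i l' u) (- s l' y u) \<odot> EE Pos (i l u) (- s l z u)"
      by (auto intro!: EE_comm i_comm2)
  qed (intro arg_cong2[where f="gprod Pos"] arg_cong[where f="gprod_list Pos"] map_cong refl; auto simp: sgnb_def simp del: upt_Suc)+
  finally show ?thesis .
qed

end


context cor_setup begin

lemma s_cont: "l \<in> {1..nu} \<Longrightarrow> continuous_on UNIV (\<lambda>x. c * s l x u)"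
  by (intro continuous_intros linear_continuous_on) (use s_lin linear_conv_bounded_linear in blast)

lemma good_L: "good (Lf u sig)"
proof -
  have "good (\<lambda>x. gprod_list Pos (map (\<lambda>l. EE Pos (i l u) (- sgnb (sig ! (l - 1)) * s l x u)) [1..<mu+1]))"
  proof (rule good_gl, rule ballI)
    fix l assume l: "l \<in> set [1..<mu+1]"
    show "good (\<lambda>x. EE Pos (i l u) (- sgnb (sig ! (l - 1)) * s l x u))"
      by (rule good_EE[OF i_sq[OF in1[OF l]] s_cont[OF in1[OF l]]])
  qed
  then show ?thesis unfolding Lf_EE[abs_def] .
qed

lemma good_R: "good (Rf u tau)"
proof -
  have "good (\<lambda>x. gprod_list Pos (map (\<lambda>l. EE Pos (i l u) (- sgnb (tau ! (l - mu - 1)) * s l x u)) [mu+1..<nu+1]))"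
  proof (rule good_gl, rule ballI)
    fix l assume l: "l \<in> set [mu+1..<nu+1]"
    show "good (\<lambda>x. EE Pos (i l u) (- sgnb (tau ! (l - mu - 1)) * s l x u))"
      by (rule good_EE[OF i_sq[OF in2[OF l]] s_cont[OF in2[OF l]]])
  qed
  then show ?thesis unfolding Rf_EE[abs_def] .
qed

lemma gexp_center:
  assumes l: "l \<in> {1..nu}" and c: "f l x u \<in> gcenter Pos"
  shows "gexp Pos (a *\<^sub>R f l x u) \<in> gcenter Pos"
proof -
  have e: "gexp Pos (a *\<^sub>R f l x u) = EE Pos (i l u) (a * s l x u)"
    by (simp only: f_def[OF l] gexp_scaled[OF i_sq[OF l]])
  show ?thesis
  proof (cases "s l x u = 0")
    case True
    then show ?thesis unfolding e by (simp add: gcenter_def)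
  next
    case False
    have "i l u = (1 / s l x u) *\<^sub>R f l x u" using False l by (simp add: f_def)
    then have "i l u \<in> gcenter Pos" using c by (simp add: gcenter_def gp_scaleR_left gp_scaleR_right)
    then show ?thesis unfolding e by (rule EE_central)
  qed
qed

lemma L_center: "\<forall>l\<in>{1..nu}. \<forall>x v. f l x v \<in> gcenter Pos \<Longrightarrow> Lf u sig x \<in> gcenter Pos"
  unfolding Lf_def
proof (intro gl_center ballI)
  assume cen: "\<forall>l\<in>{1..nu}. \<forall>x v. f l x v \<in> gcenter Pos"
  fix l assume l: "l \<in> set [1..<mu+1]"
  show "gexp Pos (- (sgnb (sig ! (l - 1))) *\<^sub>R f l x u) \<in> gcenter Pos"
    using cen in1[OF l] by (intro gexp_center) auto
qed

lemma R_center: "\<forall>l\<in>{1..nu}. \<forall>x v. f l x v \<in> gcenter Pos \<Longrightarrow> Rf u tau x \<in> gcenter Pos"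
  unfolding Rf_def
proof (intro gl_center ballI)
  assume cen: "\<forall>l\<in>{1..nu}. \<forall>x v. f l x v \<in> gcenter Pos"
  fix l assume l: "l \<in> set [mu+1..<nu+1]"
  show "gexp Pos (- (sgnb (tau ! (l - mu - 1))) *\<^sub>R f l x u) \<in> gcenter Pos"
    using cen in2[OF l] by (intro gexp_center) auto
qed

lemma pass1X: "Lf u r1 z \<odot> (W \<odot> X) = (\<Sum>j\<in>J1. cdecs Pos (bs1 u) j W \<odot> (Lf u j z \<odot> X))"
proof -
  have "Lf u r1 z \<odot> (W \<odot> X) = (Lf u r1 z \<odot> W) \<odot> X" by (rule gprod_assoc[symmetric])
  also have "\<dots> = (\<Sum>j\<in>J1. cdecs Pos (bs1 u) j W \<odot> Lf u j z) \<odot> X" by (simp only: pass1)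
  finally show ?thesis by (simp add: gp_sum_left gprod_assoc)
qed

lemma pass2X: "Y \<odot> (Rf u r2 y \<odot> X) = (\<Sum>k\<in>J2. Rf u k y \<odot> (cdecs Pos (bs2 u) k Y \<odot> X))"
proof -
  have "Y \<odot> (Rf u r2 y \<odot> X) = (Y \<odot> Rf u r2 y) \<odot> X" by (rule gprod_assoc[symmetric])
  also have "\<dots> = (\<Sum>k\<in>J2. Rf u k y \<odot> cdecs Pos (bs2 u) k Y) \<odot> X" by (simp only: pass2)
  finally show ?thesis by (simp add: gp_sum_left gprod_assoc)
qed

lemma L_add': "Lf u r1 (y + z) = Lf u r1 z \<odot> Lf u r1 y"
  using L_add[of u z y] by (simp add: add.commute)
lemma R_add': "Rf u r2 (y + z) = Rf u r2 z \<odot> Rf u r2 y"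
  using R_add[of u z y] by (simp add: add.commute)

lemma eq1:
  "(Lf u r1 (y + z) \<odot> (C y \<odot> B z)) \<odot> Rf u r2 (y + z)
   = (\<Sum>p\<in>J1 \<times> J2. (case p of (j, k) \<Rightarrow> cdecs Pos (bs1 u) j ((Lf u r1 y \<odot> C y) \<odot> Rf u k y))
        \<odot> (case p of (j, k) \<Rightarrow> (Lf u j z \<odot> cdecs Pos (bs2 u) k (B z)) \<odot> Rf u r2 z))"
proof -
  have "(Lf u r1 (y + z) \<odot> (C y \<odot> B z)) \<odot> Rf u r2 (y + z)
      = Lf u r1 z \<odot> (Lf u r1 y \<odot> (C y \<odot> (B z \<odot> (Rf u r2 y \<odot> Rf u r2 z))))"
    by (simp add: L_add' R_add gprod_assoc)
  also have "\<dots> = Lf u r1 z \<odot> (Lf u r1 y \<odot> (C y \<odot> (\<Sum>k\<in>J2. Rf u k y \<odot> (cdecs Pos (bs2 u) k (B z) \<odot> Rf u r2 z))))"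
    by (simp only: pass2X)
  also have "\<dots> = (\<Sum>k\<in>J2. Lf u r1 z \<odot> (((Lf u r1 y \<odot> C y) \<odot> Rf u k y) \<odot> (cdecs Pos (bs2 u) k (B z) \<odot> Rf u r2 z)))"
    by (simp add: gp_sum_right gprod_assoc)
  also have "\<dots> = (\<Sum>k\<in>J2. \<Sum>j\<in>J1. cdecs Pos (bs1 u) j ((Lf u r1 y \<odot> C y) \<odot> Rf u k y) \<odot> (Lf u j z \<odot> (cdecs Pos (bs2 u) k (B z) \<odot> Rf u r2 z)))"
    by (simp only: pass1X)
  also have "\<dots> = (\<Sum>j\<in>J1. \<Sum>k\<in>J2. cdecs Pos (bs1 u) j ((Lf u r1 y \<odot> C y) \<odot> Rf u k y) \<odot> ((Lf u j z \<odot> cdecs Pos (bs2 u) k (B z)) \<odot> Rf u r2 z))"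
    by (subst sum.swap) (simp only: gprod_assoc[of Pos "Lf u _ z"])
  also have "\<dots> = (\<Sum>p\<in>J1 \<times> J2. (case p of (j, k) \<Rightarrow> cdecs Pos (bs1 u) j ((Lf u r1 y \<odot> C y) \<odot> Rf u k y))
        \<odot> (case p of (j, k) \<Rightarrow> (Lf u j z \<odot> cdecs Pos (bs2 u) k (B z)) \<odot> Rf u r2 z))"
    by (simp only: sum.cartesian_product) (rule sum.cong[OF refl], auto)
  finally show ?thesis .
qed

lemma eq2:
  "(Lf u r1 (y + z) \<odot> (C y \<odot> B z)) \<odot> Rf u r2 (y + z)
   = (\<Sum>p\<in>J1 \<times> J2. (case p of (j, k) \<Rightarrow> (Lf u r1 y \<odot> cdecs Pos (bs1 u) j (C y)) \<odot> Rf u k y)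
        \<odot> (case p of (j, k) \<Rightarrow> cdecs Pos (bs2 u) k ((Lf u j z \<odot> B z) \<odot> Rf u r2 z)))"
proof -
  have "(Lf u r1 (y + z) \<odot> (C y \<odot> B z)) \<odot> Rf u r2 (y + z)
      = Lf u r1 y \<odot> (Lf u r1 z \<odot> (C y \<odot> (B z \<odot> (Rf u r2 z \<odot> Rf u r2 y))))"
    by (simp add: L_add R_add' gprod_assoc)
  also have "\<dots> = Lf u r1 y \<odot> (\<Sum>j\<in>J1. cdecs Pos (bs1 u) j (C y) \<odot> (Lf u j z \<odot> (B z \<odot> (Rf u r2 z \<odot> Rf u r2 y))))"
    by (simp only: pass1X)
  also have "\<dots> = (\<Sum>j\<in>J1. Lf u r1 y \<odot> (cdecs Pos (bs1 u) j (C y) \<odot> (((Lf u j z \<odot> B z) \<odot> Rf u r2 z) \<odot> Rf u r2 y)))"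
    by (simp add: gp_sum_right gprod_assoc)
  also have "\<dots> = (\<Sum>j\<in>J1. Lf u r1 y \<odot> (cdecs Pos (bs1 u) j (C y) \<odot> (\<Sum>k\<in>J2. Rf u k y \<odot> cdecs Pos (bs2 u) k ((Lf u j z \<odot> B z) \<odot> Rf u r2 z))))"
    by (simp only: pass2)
  also have "\<dots> = (\<Sum>j\<in>J1. \<Sum>k\<in>J2. ((Lf u r1 y \<odot> cdecs Pos (bs1 u) j (C y)) \<odot> Rf u k y) \<odot> cdecs Pos (bs2 u) k ((Lf u j z \<odot> B z) \<odot> Rf u r2 z))"
    by (simp only: gp_sum_right gprod_assoc)
  also have "\<dots> = (\<Sum>p\<in>J1 \<times> J2. (case p of (j, k) \<Rightarrow> (Lf u r1 y \<odot> cdecs Pos (bs1 u) j (C y)) \<odot> Rf u k y)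
        \<odot> (case p of (j, k) \<Rightarrow> cdecs Pos (bs2 u) k ((Lf u j z \<odot> B z) \<odot> Rf u r2 z)))"
    by (simp only: sum.cartesian_product) (rule sum.cong[OF refl], auto)
  finally show ?thesis .
qed

lemma center_swap: "a \<in> gcenter Pos \<Longrightarrow> a \<odot> (b \<odot> X) = b \<odot> (a \<odot> X)"
proof -
  assume "a \<in> gcenter Pos"
  then have ab: "a \<odot> b = b \<odot> a" by (simp add: gcenter_def)
  have "a \<odot> (b \<odot> X) = (a \<odot> b) \<odot> X" by (rule gprod_assoc[symmetric])
  also have "\<dots> = b \<odot> (a \<odot> X)" by (simp only: ab gprod_assoc)
  finally show ?thesis .
qed

lemma eq3:
  assumes cen: "\<forall>l\<in>{1..nu}. \<forall>x v. f l x v \<in> gcenter Pos"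
  shows "(Lf u r1 (y + z) \<odot> (C y \<odot> B z)) \<odot> Rf u r2 (y + z)
   = (\<Sum>p\<in>{()}. ((Lf u r1 y \<odot> C y) \<odot> Rf u r2 y) \<odot> ((Lf u r1 z \<odot> B z) \<odot> Rf u r2 z))"
proof -
  have cL: "Lf u r1 z \<in> gcenter Pos" and cR: "Rf u r2 y \<in> gcenter Pos"
    using L_center[OF cen] R_center[OF cen] by auto
  have "(Lf u r1 (y + z) \<odot> (C y \<odot> B z)) \<odot> Rf u r2 (y + z)
      = Lf u r1 y \<odot> (Lf u r1 z \<odot> (C y \<odot> (B z \<odot> (Rf u r2 y \<odot> Rf u r2 z))))"
    by (simp add: L_add R_add gprod_assoc)
  also have "B z \<odot> (Rf u r2 y \<odot> Rf u r2 z) = Rf u r2 y \<odot> (B z \<odot> Rf u r2 z)"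
    by (rule center_swap[OF cR, symmetric])
  also have "Lf u r1 z \<odot> (C y \<odot> (Rf u r2 y \<odot> (B z \<odot> Rf u r2 z))) = C y \<odot> (Rf u r2 y \<odot> (Lf u r1 z \<odot> (B z \<odot> Rf u r2 z)))"
    by (simp add: center_swap[OF cL])
  finally show ?thesis by (simp add: gprod_assoc)
qed

end


context cor_setup begin

lemma good_bounds:
  obtains KP KQ where "continuous_on UNIV (Lf u sig)" "continuous_on UNIV (Rf u tau)"
    "\<forall>x. norm (Lf u sig x) \<le> KP" "\<forall>x. norm (Rf u tau x) \<le> KQ"
  using good_L[of u sig] good_R[of u tau] unfolding good_def by blast

lemma int_FT:
  assumes "integrable lborel D"
  shows "integrable lborel (\<lambda>x. (Lf u sig x \<odot> D x) \<odot> Rf u tau x)"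
  by (rule good_integrable[OF good_L good_R assms])

lemma int_cdecs: "integrable lborel D \<Longrightarrow> integrable lborel (\<lambda>x. cdecs Pos bs ts (D x))"
  by (rule integrable_bounded_linear[OF bl_cdecs])

lemma FT_cdecs:
  assumes "integrable lborel D"
  shows "(\<integral>x. cdecs Pos bs ts ((Lf u sig x \<odot> D x) \<odot> Rf u tau x) \<partial>lborel) = cdecs Pos bs ts (FT Pos f mu nu sig tau D u)"
  unfolding FT_eq by (rule integral_bounded_linear[OF bl_cdecs int_FT[OF assms]])

theorem res1:
  assumes B: "integrable lborel B" and C: "integrable lborel C"
  shows "FT Pos f mu nu r1 r2 (gconv Pos C B) u =
       (\<Sum>j\<in>J1. \<Sum>k\<in>J2. cdecs Pos (bs1 u) j (FT Pos f mu nu r1 k C u)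
            \<odot> FT Pos f mu nu j r2 (\<lambda>x. cdecs Pos (bs2 u) k (B x)) u)"
proof -
  obtain KP KQ where g: "continuous_on UNIV (Lf u r1)" "continuous_on UNIV (Rf u r2)"
    "\<forall>x. norm (Lf u r1 x) \<le> KP" "\<forall>x. norm (Rf u r2 x) \<le> KQ"
    using good_bounds by blast
  define G where "G = (\<lambda>p y. case p of (j, k) \<Rightarrow> cdecs Pos (bs1 u) j ((Lf u r1 y \<odot> C y) \<odot> Rf u k y))"
  define H where "H = (\<lambda>p z. case p of (j, k) \<Rightarrow> (Lf u j z \<odot> cdecs Pos (bs2 u) k (B z)) \<odot> Rf u r2 z)"
  have "FT Pos f mu nu r1 r2 (gconv Pos C B) u = (\<integral>x. (Lf u r1 x \<odot> gconv Pos C B x) \<odot> Rf u r2 x \<partial>lborel)"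
    by (rule FT_eq)
  also have "\<dots> = (\<Sum>p\<in>J1 \<times> J2. (\<integral>y. G p y \<partial>lborel) \<odot> (\<integral>z. H p z \<partial>lborel))"
  proof (rule conv_main[OF B C g])
    show "finite (J1 \<times> J2)" using finite_bool_lists by blast
    show "\<forall>p\<in>J1 \<times> J2. integrable lborel (G p)"
      unfolding G_def by (intro ballI) (simp only: split_beta, rule int_cdecs[OF int_FT[OF C]])
    show "\<forall>p\<in>J1 \<times> J2. integrable lborel (H p)"
      unfolding H_def by (intro ballI) (simp only: split_beta, rule int_FT[OF int_cdecs[OF B]])
    show "\<forall>y z. (Lf u r1 (y + z) \<odot> (C y \<odot> B z)) \<odot> Rf u r2 (y + z) = (\<Sum>p\<in>J1 \<times> J2. G p y \<odot> H p z)"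
      unfolding G_def H_def by (intro allI eq1)
  qed
  also have "\<dots> = (\<Sum>j\<in>J1. \<Sum>k\<in>J2. cdecs Pos (bs1 u) j (FT Pos f mu nu r1 k C u)
            \<odot> FT Pos f mu nu j r2 (\<lambda>x. cdecs Pos (bs2 u) k (B x)) u)"
  proof -
    have "(\<Sum>p\<in>J1 \<times> J2. (\<integral>y. G p y \<partial>lborel) \<odot> (\<integral>z. H p z \<partial>lborel))
        = (\<Sum>j\<in>J1. \<Sum>k\<in>J2. (\<integral>y. G (j, k) y \<partial>lborel) \<odot> (\<integral>z. H (j, k) z \<partial>lborel))"
      by (simp add: sum.cartesian_product)
    also have "\<dots> = (\<Sum>j\<in>J1. \<Sum>k\<in>J2. cdecs Pos (bs1 u) j (FT Pos f mu nu r1 k C u)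
            \<odot> FT Pos f mu nu j r2 (\<lambda>x. cdecs Pos (bs2 u) k (B x)) u)"
      by (intro sum.cong refl) (simp add: G_def H_def FT_cdecs[OF C] FT_eq)
    finally show ?thesis .
  qed
  finally show ?thesis .
qed

theorem res2:
  assumes B: "integrable lborel B" and C: "integrable lborel C"
  shows "FT Pos f mu nu r1 r2 (gconv Pos C B) u =
       (\<Sum>j\<in>J1. \<Sum>k\<in>J2. FT Pos f mu nu r1 k (\<lambda>x. cdecs Pos (bs1 u) j (C x)) u
            \<odot> cdecs Pos (bs2 u) k (FT Pos f mu nu j r2 B u))"
proof -
  obtain KP KQ where g: "continuous_on UNIV (Lf u r1)" "continuous_on UNIV (Rf u r2)"
    "\<forall>x. norm (Lf u r1 x) \<le> KP" "\<forall>x. norm (Rf u r2 x) \<le> KQ"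
    using good_bounds by blast
  define G where "G = (\<lambda>p y. case p of (j, k) \<Rightarrow> (Lf u r1 y \<odot> cdecs Pos (bs1 u) j (C y)) \<odot> Rf u k y)"
  define H where "H = (\<lambda>p z. case p of (j, k) \<Rightarrow> cdecs Pos (bs2 u) k ((Lf u j z \<odot> B z) \<odot> Rf u r2 z))"
  have "FT Pos f mu nu r1 r2 (gconv Pos C B) u = (\<integral>x. (Lf u r1 x \<odot> gconv Pos C B x) \<odot> Rf u r2 x \<partial>lborel)"
    by (rule FT_eq)
  also have "\<dots> = (\<Sum>p\<in>J1 \<times> J2. (\<integral>y. G p y \<partial>lborel) \<odot> (\<integral>z. H p z \<partial>lborel))"
  proof (rule conv_main[OF B C g])
    show "finite (J1 \<times> J2)" using finite_bool_lists by blast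
    show "\<forall>p\<in>J1 \<times> J2. integrable lborel (G p)"
      unfolding G_def by (intro ballI) (simp only: split_beta, rule int_FT[OF int_cdecs[OF C]])
    show "\<forall>p\<in>J1 \<times> J2. integrable lborel (H p)"
      unfolding H_def by (intro ballI) (simp only: split_beta, rule int_cdecs[OF int_FT[OF B]])
    show "\<forall>y z. (Lf u r1 (y + z) \<odot> (C y \<odot> B z)) \<odot> Rf u r2 (y + z) = (\<Sum>p\<in>J1 \<times> J2. G p y \<odot> H p z)"
      unfolding G_def H_def by (intro allI eq2)
  qed
  also have "\<dots> = (\<Sum>j\<in>J1. \<Sum>k\<in>J2. FT Pos f mu nu r1 k (\<lambda>x. cdecs Pos (bs1 u) j (C x)) u
            \<odot> cdecs Pos (bs2 u) k (FT Pos f mu nu j r2 B u))"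
  proof -
    have "(\<Sum>p\<in>J1 \<times> J2. (\<integral>y. G p y \<partial>lborel) \<odot> (\<integral>z. H p z \<partial>lborel))
        = (\<Sum>j\<in>J1. \<Sum>k\<in>J2. (\<integral>y. G (j, k) y \<partial>lborel) \<odot> (\<integral>z. H (j, k) z \<partial>lborel))"
      by (simp add: sum.cartesian_product)
    also have "\<dots> = (\<Sum>j\<in>J1. \<Sum>k\<in>J2. FT Pos f mu nu r1 k (\<lambda>x. cdecs Pos (bs1 u) j (C x)) u
            \<odot> cdecs Pos (bs2 u) k (FT Pos f mu nu j r2 B u))"
      by (intro sum.cong refl) (simp add: G_def H_def FT_cdecs[OF B] FT_eq)
    finally show ?thesis .
  qed
  finally show ?thesis .
qed

theorem res3:
  assumes B: "integrable lborel B" and C: "integrable lborel C"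
    and cen: "\<forall>l\<in>{1..nu}. \<forall>x v. f l x v \<in> gcenter Pos"
  shows "FT Pos f mu nu r1 r2 (gconv Pos C B) u = FT Pos f mu nu r1 r2 C u \<odot> FT Pos f mu nu r1 r2 B u"
proof -
  obtain KP KQ where g: "continuous_on UNIV (Lf u r1)" "continuous_on UNIV (Rf u r2)"
    "\<forall>x. norm (Lf u r1 x) \<le> KP" "\<forall>x. norm (Rf u r2 x) \<le> KQ"
    using good_bounds by blast
  define G where "G = (\<lambda>(p::unit) y. (Lf u r1 y \<odot> C y) \<odot> Rf u r2 y)"
  define H where "H = (\<lambda>(p::unit) z. (Lf u r1 z \<odot> B z) \<odot> Rf u r2 z)"
  have "FT Pos f mu nu r1 r2 (gconv Pos C B) u = (\<integral>x. (Lf u r1 x \<odot> gconv Pos C B x) \<odot> Rf u r2 x \<partial>lborel)"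
    by (rule FT_eq)
  also have "\<dots> = (\<Sum>p\<in>{()}. (\<integral>y. G p y \<partial>lborel) \<odot> (\<integral>z. H p z \<partial>lborel))"
  proof (rule conv_main[OF B C g])
    show "\<forall>p\<in>{()}. integrable lborel (G p)" unfolding G_def using C by (auto intro!: int_FT)
    show "\<forall>p\<in>{()}. integrable lborel (H p)" unfolding H_def using B by (auto intro!: int_FT)
    show "\<forall>y z. (Lf u r1 (y + z) \<odot> (C y \<odot> B z)) \<odot> Rf u r2 (y + z) = (\<Sum>p\<in>{()}. G p y \<odot> H p z)"
      unfolding G_def H_def using eq3[OF cen] by simp
  qed simp
  also have "\<dots> = FT Pos f mu nu r1 r2 C u \<odot> FT Pos f mu nu r1 r2 B u"
    by (simp add: G_def H_def FT_eq)
  finally show ?thesis .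
qed

end

theorem corollary4p11:
  fixes Pos :: "('n::{finite,linorder}) set"
    and mu nu :: nat
    and s :: "nat \<Rightarrow> real^'m \<Rightarrow> real^'m \<Rightarrow> real"
    and i :: "nat \<Rightarrow> real^'m \<Rightarrow> 'n mv"
    and f :: "nat \<Rightarrow> real^'m \<Rightarrow> real^'m \<Rightarrow> 'n mv"
    and B C :: "real^'m \<Rightarrow> 'n mv"
    and u :: "real^'m"
  assumes munu: "mu \<le> nu"
    and f_def: "\<And>l x v. l \<in> {1..nu} \<Longrightarrow> f l x v = s l x v *\<^sub>R i l v"
    and s_lin: "\<And>l v. l \<in> {1..nu} \<Longrightarrow> linear (\<lambda>x. s l x v)"
    and i_sq: "\<And>l v. l \<in> {1..nu} \<Longrightarrow> i l v \<in> sqneg Pos"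
    and i_blade: "\<And>l v. l \<in> {1..nu} \<Longrightarrow> is_blade Pos (i l v)"
    and i_coorth: "\<And>l l' v. l \<in> {1..nu} \<Longrightarrow> l' \<in> {1..nu} \<Longrightarrow> l \<noteq> l' \<Longrightarrow>
                     coorthogonal Pos (i l v) (i l' v)"
    and i_comm1: "\<And>l l' v. l \<in> {1..mu} \<Longrightarrow> l' \<in> {1..mu} \<Longrightarrow>
                     gprod Pos (i l v) (i l' v) = gprod Pos (i l' v) (i l v)"
    and i_comm2: "\<And>l l' v. l \<in> {mu+1..nu} \<Longrightarrow> l' \<in> {mu+1..nu} \<Longrightarrow>
                     gprod Pos (i l v) (i l' v) = gprod Pos (i l' v) (i l v)"
    and B_int: "integrable lborel B"
    and C_int: "integrable lborel C"
  shows
    "FT Pos f mu nu (replicate mu False) (replicate (nu - mu) False) (gconv Pos C B) u =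
       (\<Sum>j\<in>{js. length js = mu}. \<Sum>k\<in>{ks. length ks = nu - mu}.
          gprod Pos
            (cdecs Pos (map (\<lambda>l. i l u) [1..<mu+1]) j
               (FT Pos f mu nu (replicate mu False) k C u))
            (FT Pos f mu nu j (replicate (nu - mu) False)
               (\<lambda>x. cdecs Pos (map (\<lambda>l. i l u) [mu+1..<nu+1]) k (B x)) u))
   \<and> FT Pos f mu nu (replicate mu False) (replicate (nu - mu) False) (gconv Pos C B) u =
       (\<Sum>j\<in>{js. length js = mu}. \<Sum>k\<in>{ks. length ks = nu - mu}.
          gprod Pos
            (FT Pos f mu nu (replicate mu False) k
               (\<lambda>x. cdecs Pos (map (\<lambda>l. i l u) [1..<mu+1]) j (C x)) u)
            (cdecs Pos (map (\<lambda>l. i l u) [mu+1..<nu+1]) k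
               (FT Pos f mu nu j (replicate (nu - mu) False) B u)))
   \<and> ((\<forall>l\<in>{1..nu}. \<forall>x v. f l x v \<in> gcenter Pos) \<longrightarrow>
       FT Pos f mu nu (replicate mu False) (replicate (nu - mu) False) (gconv Pos C B) u =
         gprod Pos (FT Pos f mu nu (replicate mu False) (replicate (nu - mu) False) C u)
                   (FT Pos f mu nu (replicate mu False) (replicate (nu - mu) False) B u))"
  proof -
  interpret c: cor_setup Pos mu nu s i f
    by (rule cor_setup.intro[OF munu f_def s_lin i_sq i_coorth i_comm1 i_comm2])
  show ?thesis
    using c.res1[OF B_int C_int, where u=u] c.res2[OF B_int C_int, where u=u] c.res3[OF B_int C_int, where u=u]
    unfolding c.bs1_def c.bs2_def by blast
qed

end
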